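(* The logics $\mathsf{E}$, $\mathsf{M}$, $\mathsf{MC}$, $\mathsf{EN}$, $\mathsf{MN}$, $\mathsf{K}$, $\mathsf{CE}$, $\mathsf{CM}$, $\mathsf{CMC}$, $\mathsf{CEN}$, $\mathsf{CMN}$, $\mathsf{CK}$ and $\mathsf{CKID}$ have the uniform Lyndon interpolation property (ULIP), and hence also the uniform interpolation property (UIP) and the Lyndon interpolation property (LIP).
   Context: Formulas of $\mathcal{L}_\Box$: atoms, $\bot$, $\wedge,\vee,\to$, unary $\Box$; of $\mathcal{L}_\triangleright$: atoms, $\bot$, $\wedge,\vee,\to$, binary $\triangleright$. $\top:=\bot\to\bot$, $\neg A:=A\to\bot$. Modal logics (in $\mathcal{L}_\Box$): $\mathsf{E}$ is the smallest set containing all instances of classical tautologies and closed under modus ponens and the rule: from $\phi\leftrightarrow\psi$ infer $\Box\phi\leftrightarrow\Box\psi$. Axiom schemes: (M) $\Box(\phi\wedge\psi)\to\Box\phi\wedge\Box\psi$; (C) $\Box\phi\wedge\Box\psi\to\Box(\phi\wedge\psi)$; (N) $\Box\top$. $\mathsf{EN}=\mathsf{E}+(N)$, $\mathsf{M}=\mathsf{E}+(M)$, $\mathsf{MN}=\mathsf{M}+(N)$, $\mathsf{MC}=\mathsf{M}+(C)$, $\mathsf{K}=\mathsf{MC}+(N)$. Conditional logics (in $\mathcal{L}_\triangleright$): $\mathsf{CE}$ is the smallest set containing all instances of classical tautologies and closed under modus ponens and the rule: from $\phi_0\leftrightarrow\phi_1$ and $\psi_0\leftrightarrow\psi_1$ infer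 $(\phi_0\triangleright\psi_0)\to(\phi_1\triangleright\psi_1)$. Axiom schemes: (CM) $(\phi\triangleright\psi\wedge\theta)\to(\phi\triangleright\psi)\wedge(\phi\triangleright\theta)$; (CC) $(\phi\triangleright\psi)\wedge(\phi\triangleright\theta)\to(\phi\triangleright\psi\wedge\theta)$; (CN) $\phi\triangleright\top$; (ID) $\phi\triangleright\phi$. $\mathsf{CEN}=\mathsf{CE}+(CN)$, $\mathsf{CM}=\mathsf{CE}+(CM)$, $\mathsf{CMN}=\mathsf{CM}+(CN)$, $\mathsf{CMC}=\mathsf{CM}+(CC)$, $\mathsf{CK}=\mathsf{CMC}+(CN)$, $\mathsf{CKID}=\mathsf{CK}+(ID)$. Positive/negative variables: $V^+(p)=\{p\}$, $V^-(p)=\varnothing$; $V^\pm(\bot)=V^\pm(\top)=\varnothing$; $V^\pm(\phi\odot\psi)=V^\pm(\phi)\cup V^\pm(\psi)$ for $\odot\in\{\wedge,\vee\}$; $V^+(\phi\to\psi)=V^-(\phi)\cup V^+(\psi)$, $V^-(\phi\to\psi)=V^+(\phi)\cup V^-(\psi)$; $V^\pm(\Box\phi)=V^\pm(\phi)$; $V^+(\phi\triangleright\psi)=V^-(\phi)\cup V^+(\psi)$, $V^-(\phi\triangleright\psi)=V^+(\phi)\cup V^-(\psi)$; $V=V^+\cup V^-$. $p^\circ$-free: $p\notin V^\circ(\cdot)$. ULIP for a logic $L$: for every formula $\phi$, atom $p$, $\circ\in\{+,-\}$ there are $p^\circ$-free formulas $\forall^\circ p\,\phi$, $\exists^\circ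 p\,\phi$ with $V^\dagger(\cdot)\subseteq V^\dagger(\phi)$ for both $\dagger\in\{+,-\}$, such that $L\vdash\forall^\circ p\,\phi\to\phi$; for every $p^\circ$-free $\psi$, $L\vdash\psi\to\phi$ implies $L\vdash\psi\to\forall^\circ p\,\phi$; $L\vdash\phi\to\exists^\circ p\,\phi$; for every $p^\circ$-free $\psi$, $L\vdash\phi\to\psi$ implies $L\vdash\exists^\circ p\,\phi\to\psi$. UIP: same with polarities omitted ($p$-free, $V$). LIP: if $L\vdash\phi\to\psi$ there is $\theta$ with $V^\dagger(\theta)\subseteq V^\dagger(\phi)\cap V^\dagger(\psi)$ for both $\dagger$, $L\vdash\phi\to\theta$, $L\vdash\theta\to\psi$. *)

theory Defs
  imports Main
begin

datatype mfm = MAtom nat | MBot | MAnd mfm mfm | MOr mfm mfm | MImp mfm mfm | MBox mfm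

definition MTop :: mfm where "MTop = MImp MBot MBot"
definition MIff :: "mfm \<Rightarrow> mfm \<Rightarrow> mfm" where "MIff a b = MAnd (MImp a b) (MImp b a)"

fun meval :: "(mfm \<Rightarrow> bool) \<Rightarrow> mfm \<Rightarrow> bool" where
  "meval v (MAtom p) = v (MAtom p)"
| "meval v MBot = False"
| "meval v (MAnd a b) = (meval v a \<and> meval v b)"
| "meval v (MOr a b) = (meval v a \<or> meval v b)"
| "meval v (MImp a b) = (meval v a \<longrightarrow> meval v b)"
| "meval v (MBox a) = v (MBox a)"

definition mtaut :: "mfm \<Rightarrow> bool" where "mtaut f = (\<forall>v. meval v f)"

inductive_set mlogic :: "mfm set \<Rightarrow> mfm set" for Ax :: "mfm set" where
  taut: "mtaut f \<Longrightarrow> f \<in> mlogic Ax"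
| ax: "f \<in> Ax \<Longrightarrow> f \<in> mlogic Ax"
| mp: "f \<in> mlogic Ax \<Longrightarrow> MImp f g \<in> mlogic Ax \<Longrightarrow> g \<in> mlogic Ax"
| re: "MIff f g \<in> mlogic Ax \<Longrightarrow> MIff (MBox f) (MBox g) \<in> mlogic Ax"

definition axM :: "mfm set" where
  "axM = {MImp (MBox (MAnd f g)) (MAnd (MBox f) (MBox g)) | f g. True}"
definition axC :: "mfm set" where
  "axC = {MImp (MAnd (MBox f) (MBox g)) (MBox (MAnd f g)) | f g. True}"
definition axN :: "mfm set" where
  "axN = {MBox MTop}"

definition logE :: "mfm set" where "logE = mlogic {}"
definition logEN :: "mfm set" where "logEN = mlogic axN"
definition logM :: "mfm set" where "logM = mlogic axM"
definition logMN :: "mfm set" where "logMN = mlogic (axM \<union> axN)"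
definition logMC :: "mfm set" where "logMC = mlogic (axM \<union> axC)"
definition logK :: "mfm set" where "logK = mlogic (axM \<union> axC \<union> axN)"

text \<open>Polarised variables: mV True = V^+, mV False = V^-.\<close>
fun mV :: "bool \<Rightarrow> mfm \<Rightarrow> nat set" where
  "mV b (MAtom p) = (if b then {p} else {})"
| "mV b MBot = {}"
| "mV b (MAnd f g) = mV b f \<union> mV b g"
| "mV b (MOr f g) = mV b f \<union> mV b g"
| "mV b (MImp f g) = mV (\<not> b) f \<union> mV b g"
| "mV b (MBox f) = mV b f"

definition mVall :: "mfm \<Rightarrow> nat set" where "mVall f = mV True f \<union> mV False f"

datatype cfm = CAtom nat | CBot | CAnd cfm cfm | COr cfm cfm | CImp cfm cfm | Cond cfm cfm

definition CTop :: cfm where "CTop = CImp CBot CBot"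
definition CIff :: "cfm \<Rightarrow> cfm \<Rightarrow> cfm" where "CIff a b = CAnd (CImp a b) (CImp b a)"

fun ceval :: "(cfm \<Rightarrow> bool) \<Rightarrow> cfm \<Rightarrow> bool" where
  "ceval v (CAtom p) = v (CAtom p)"
| "ceval v CBot = False"
| "ceval v (CAnd a b) = (ceval v a \<and> ceval v b)"
| "ceval v (COr a b) = (ceval v a \<or> ceval v b)"
| "ceval v (CImp a b) = (ceval v a \<longrightarrow> ceval v b)"
| "ceval v (Cond a b) = v (Cond a b)"

definition ctaut :: "cfm \<Rightarrow> bool" where "ctaut f = (\<forall>v. ceval v f)"

inductive_set clogic :: "cfm set \<Rightarrow> cfm set" for Ax :: "cfm set" where
  taut: "ctaut f \<Longrightarrow> f \<in> clogic Ax"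
| ax: "f \<in> Ax \<Longrightarrow> f \<in> clogic Ax"
| mp: "f \<in> clogic Ax \<Longrightarrow> CImp f g \<in> clogic Ax \<Longrightarrow> g \<in> clogic Ax"
| re: "CIff f0 f1 \<in> clogic Ax \<Longrightarrow> CIff g0 g1 \<in> clogic Ax \<Longrightarrow>
       CImp (Cond f0 g0) (Cond f1 g1) \<in> clogic Ax"

definition axCM :: "cfm set" where
  "axCM = {CImp (Cond f (CAnd g h)) (CAnd (Cond f g) (Cond f h)) | f g h. True}"
definition axCC :: "cfm set" where
  "axCC = {CImp (CAnd (Cond f g) (Cond f h)) (Cond f (CAnd g h)) | f g h. True}"
definition axCN :: "cfm set" where
  "axCN = {Cond f CTop | f. True}"
definition axID :: "cfm set" where
  "axID = {Cond f f | f. True}"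

definition logCE :: "cfm set" where "logCE = clogic {}"
definition logCEN :: "cfm set" where "logCEN = clogic axCN"
definition logCM :: "cfm set" where "logCM = clogic axCM"
definition logCMN :: "cfm set" where "logCMN = clogic (axCM \<union> axCN)"
definition logCMC :: "cfm set" where "logCMC = clogic (axCM \<union> axCC)"
definition logCK :: "cfm set" where "logCK = clogic (axCM \<union> axCC \<union> axCN)"
definition logCKID :: "cfm set" where "logCKID = clogic (axCM \<union> axCC \<union> axCN \<union> axID)"

fun cV :: "bool \<Rightarrow> cfm \<Rightarrow> nat set" where
  "cV b (CAtom p) = (if b then {p} else {})"
| "cV b CBot = {}"
| "cV b (CAnd f g) = cV b f \<union> cV b g"
| "cV b (COr f g) = cV b f \<union> cV b g"
| "cV b (CImp f g) = cV (\<not> b) f \<union> cV b g"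
| "cV b (Cond f g) = cV (\<not> b) f \<union> cV b g"

definition cVall :: "cfm \<Rightarrow> nat set" where "cVall f = cV True f \<union> cV False f"

text \<open>V b: polarised variables (b = True is +), imp: implication, L: the logic (set of theorems).
  Polarity pol ranges over bool (True = +, False = -).\<close>
definition ULIP :: "(bool \<Rightarrow> 'f \<Rightarrow> nat set) \<Rightarrow> ('f \<Rightarrow> 'f \<Rightarrow> 'f) \<Rightarrow> 'f set \<Rightarrow> bool" where
  "ULIP V imp L = (\<forall>\<phi> p pol.
     (\<exists>A. p \<notin> V pol A \<and> (\<forall>d. V d A \<subseteq> V d \<phi>) \<and> imp A \<phi> \<in> L \<and>
          (\<forall>\<psi>. p \<notin> V pol \<psi> \<longrightarrow> imp \<psi> \<phi> \<in> L \<longrightarrow> imp \<psi> A \<in> L)) \<and>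
     (\<exists>E. p \<notin> V pol E \<and> (\<forall>d. V d E \<subseteq> V d \<phi>) \<and> imp \<phi> E \<in> L \<and>
          (\<forall>\<psi>. p \<notin> V pol \<psi> \<longrightarrow> imp \<phi> \<psi> \<in> L \<longrightarrow> imp E \<psi> \<in> L)))"

definition UIP :: "('f \<Rightarrow> nat set) \<Rightarrow> ('f \<Rightarrow> 'f \<Rightarrow> 'f) \<Rightarrow> 'f set \<Rightarrow> bool" where
  "UIP Va imp L = (\<forall>\<phi> p.
     (\<exists>A. p \<notin> Va A \<and> Va A \<subseteq> Va \<phi> \<and> imp A \<phi> \<in> L \<and>
          (\<forall>\<psi>. p \<notin> Va \<psi> \<longrightarrow> imp \<psi> \<phi> \<in> L \<longrightarrow> imp \<psi> A \<in> L)) \<and>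
     (\<exists>E. p \<notin> Va E \<and> Va E \<subseteq> Va \<phi> \<and> imp \<phi> E \<in> L \<and>
          (\<forall>\<psi>. p \<notin> Va \<psi> \<longrightarrow> imp \<phi> \<psi> \<in> L \<longrightarrow> imp E \<psi> \<in> L)))"

definition LIP :: "(bool \<Rightarrow> 'f \<Rightarrow> nat set) \<Rightarrow> ('f \<Rightarrow> 'f \<Rightarrow> 'f) \<Rightarrow> 'f set \<Rightarrow> bool" where
  "LIP V imp L = (\<forall>\<phi> \<psi>. imp \<phi> \<psi> \<in> L \<longrightarrow>
     (\<exists>\<theta>. (\<forall>d. V d \<theta> \<subseteq> V d \<phi> \<inter> V d \<psi>) \<and> imp \<phi> \<theta> \<in> L \<and> imp \<theta> \<psi> \<in> L))"

definition all_interp_props :: "(bool \<Rightarrow> 'f \<Rightarrow> nat set) \<Rightarrow> ('f \<Rightarrow> 'f \<Rightarrow> 'f) \<Rightarrow> 'f set \<Rightarrow> bool" where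
  "all_interp_props V imp L =
     (ULIP V imp L \<and> UIP (\<lambda>f. V True f \<union> V False f) imp L \<and> LIP V imp L)"

end

theory Submission
  imports Defs
begin



fun isC :: "cfm \<Rightarrow> bool" where "isC (Cond a b) = True" | "isC _ = False"
fun ant :: "cfm \<Rightarrow> cfm" where "ant (Cond a b) = a" | "ant _ = CBot"
fun cns :: "cfm \<Rightarrow> cfm" where "cns (Cond a b) = b" | "cns _ = CBot"

lemma isC_eq: "isC x \<Longrightarrow> x = Cond (ant x) (cns x)"
  by (cases x) auto

definition neg :: "cfm \<Rightarrow> cfm" where "neg f = CImp f CBot"

definition conjs :: "cfm set \<Rightarrow> cfm" where
  "conjs S = foldr CAnd (SOME xs. set xs = S) CTop"

lemma ceval_CTop[simp]: "ceval v CTop" by (simp add: CTop_def)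
lemma cV_CTop[simp]: "cV d CTop = {}" by (simp add: CTop_def)
lemma ceval_CIff[simp]: "ceval v (CIff a b) = (ceval v a = ceval v b)" by (auto simp: CIff_def)
lemma ceval_neg[simp]: "ceval v (neg a) = (\<not> ceval v a)" by (simp add: neg_def)
lemma cV_neg[simp]: "cV d (neg a) = cV (\<not> d) a" by (simp add: neg_def)

lemma ceval_foldr: "ceval v (foldr CAnd xs CTop) = (\<forall>x\<in>set xs. ceval v x)"
  by (induction xs) auto

lemma cV_foldr: "cV d (foldr CAnd xs CTop) = (\<Union>x\<in>set xs. cV d x)"
  by (induction xs) auto

lemma conjs_set: "finite S \<Longrightarrow> set (SOME xs. set xs = S) = S"
  by (metis (mono_tags) finite_list someI_ex)

lemma ceval_conjs[simp]: "finite S \<Longrightarrow> ceval v (conjs S) = (\<forall>x\<in>S. ceval v x)"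
  unfolding conjs_def using conjs_set ceval_foldr by metis

lemma cV_conjs[simp]: "finite S \<Longrightarrow> cV d (conjs S) = (\<Union>x\<in>S. cV d x)"
  unfolding conjs_def using conjs_set cV_foldr by metis

fun cdepth :: "cfm \<Rightarrow> nat" where
  "cdepth (CAtom _) = 0"
| "cdepth CBot = 0"
| "cdepth (CAnd a b) = max (cdepth a) (cdepth b)"
| "cdepth (COr a b) = max (cdepth a) (cdepth b)"
| "cdepth (CImp a b) = max (cdepth a) (cdepth b)"
| "cdepth (Cond a b) = Suc (max (cdepth a) (cdepth b))"

lemma cdepth_CTop[simp]: "cdepth CTop = 0" by (simp add: CTop_def)
lemma cdepth_neg[simp]: "cdepth (neg a) = cdepth a" by (simp add: neg_def)

lemma cdepth_foldr: "(\<forall>x\<in>set xs. cdepth x \<le> k) \<Longrightarrow> cdepth (foldr CAnd xs CTop) \<le> k"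
  by (induction xs) auto

lemma cdepth_conjs: "finite S \<Longrightarrow> (\<forall>x\<in>S. cdepth x \<le> k) \<Longrightarrow> cdepth (conjs S) \<le> k"
  unfolding conjs_def using conjs_set cdepth_foldr by metis

lemma finite_cV[simp]: "finite (cV d f)"
  by (induction f arbitrary: d) auto

fun occ :: "bool \<Rightarrow> cfm \<Rightarrow> cfm set" where
  "occ b (CAtom q) = (if b then {CAtom q} else {})"
| "occ b CBot = {}"
| "occ b (CAnd f g) = occ b f \<union> occ b g"
| "occ b (COr f g) = occ b f \<union> occ b g"
| "occ b (CImp f g) = occ (\<not> b) f \<union> occ b g"
| "occ b (Cond f g) = (if b then {Cond f g} else {})"

lemma finite_occ[simp]: "finite (occ b f)"
  by (induction f arbitrary: b) auto

lemma occ_mono: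
  "(\<forall>x\<in>occ True f. w x \<longrightarrow> u x) \<Longrightarrow> (\<forall>x\<in>occ False f. u x \<longrightarrow> w x) \<Longrightarrow> ceval w f \<Longrightarrow> ceval u f"
proof (induction f arbitrary: w u)
  case (CImp f1 f2)
  show ?case
  proof (simp, intro impI)
    assume u1: "ceval u f1"
    have "ceval w f1"
      by (rule CImp.IH(1)[of u w]) (use CImp.prems(1,2) u1 in auto)
    then have "ceval w f2" using CImp.prems(3) by simp
    then show "ceval u f2"
      by (rule CImp.IH(2)[rotated 2]) (use CImp.prems(1,2) in auto)
  qed
next
  case (CAnd f1 f2)
  then show ?case using CAnd.IH[of w u] by auto
next
  case (COr f1 f2)
  then show ?case using COr.IH[of w u] by auto
qed auto

lemma occ_agree:
  "(\<forall>x\<in>occ True f \<union> occ False f. w x = u x) \<Longrightarrow> ceval w f = ceval u f"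
  using occ_mono[of f w u] occ_mono[of f u w] by auto

lemma occ_cV: "x \<in> occ b f \<Longrightarrow> cV d x \<subseteq> cV (b = d) f"
proof (induction f arbitrary: b d)
  case (CAnd f1 f2)
  then show ?case by (simp; blast)
next
  case (COr f1 f2)
  then show ?case by (simp; blast)
next
  case (CImp f1 f2)
  then have "x \<in> occ (\<not> b) f1 \<or> x \<in> occ b f2" by simp
  then show ?case
  proof
    assume "x \<in> occ (\<not> b) f1"
    then show ?thesis using CImp.IH(1) by (cases b; cases d; fastforce)
  next
    assume "x \<in> occ b f2"
    then show ?thesis using CImp.IH(2) by auto
  qed
qed (auto split: if_splits)

lemma occ_depth: "x \<in> occ b f \<Longrightarrow> cdepth x \<le> cdepth f"
  by (induction f arbitrary: b) (auto split: if_splits simp: le_max_iff_disj)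

lemma occ_atom_or_C: "x \<in> occ b f \<Longrightarrow> isC x \<or> (\<exists>q. x = CAtom q)"
  by (induction f arbitrary: b) (auto split: if_splits simp: le_max_iff_disj)

fun tv :: "bool \<Rightarrow> cfm" where "tv b = (if b then CTop else CBot)"

fun replc :: "(cfm \<Rightarrow> bool) \<Rightarrow> (cfm \<Rightarrow> bool) \<Rightarrow> cfm \<Rightarrow> cfm" where
  "replc R s (CAtom q) = (if R (CAtom q) then tv (s (CAtom q)) else CAtom q)"
| "replc R s CBot = CBot"
| "replc R s (CAnd f g) = CAnd (replc R s f) (replc R s g)"
| "replc R s (COr f g) = COr (replc R s f) (replc R s g)"
| "replc R s (CImp f g) = CImp (replc R s f) (replc R s g)"
| "replc R s (Cond f g) = (if R (Cond f g) then tv (s (Cond f g)) else Cond f g)"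

lemma ceval_replc: "ceval w (replc R s f) = ceval (\<lambda>x. if R x then s x else w x) f"
  by (induction f) auto

lemma cdepth_replc: "cdepth (replc R s f) \<le> cdepth f"
  by (induction f) auto

lemma cV_replc: "q \<in> cV d (replc R s f) \<Longrightarrow> \<exists>b x. x \<in> occ b f \<and> \<not> R x \<and> q \<in> cV (b = d) x"
proof (induction f arbitrary: d)
  case (CAtom x)
  then show ?case by (auto split: if_splits)
next
  case (CAnd f1 f2)
  then show ?case by (simp; blast)
next
  case (COr f1 f2)
  then show ?case by (simp; blast)
next
  case (CImp f1 f2)
  from CImp.prems have "q \<in> cV (\<not> d) (replc R s f1) \<or> q \<in> cV d (replc R s f2)" by simp
  then show ?case
  proof
    assume "q \<in> cV (\<not> d) (replc R s f1)"
    then obtain b x where "x \<in> occ b f1" "\<not> R x" "q \<in> cV (b = (\<not> d)) x" using CImp.IH(1) by blast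
    then show ?thesis by (intro exI[of _ "\<not> b"] exI[of _ x]) (cases b; cases d; auto)
  next
    assume "q \<in> cV d (replc R s f2)"
    then show ?thesis using CImp.IH(2) by (simp; blast)
  qed
next
  case (Cond f1 f2)
  then show ?case by (auto split: if_splits intro!: exI[of _ True])
qed auto




section \<open>Propositional reasoning inside conditional logics\<close>

lemma L_sem:
  assumes "finite F" "F \<subseteq> clogic Ax" "\<And>v. (\<forall>f\<in>F. ceval v f) \<Longrightarrow> ceval v g"
  shows "g \<in> clogic Ax"
  using assms
proof (induction F arbitrary: g rule: finite_induct)
  case empty
  then show ?case by (auto intro: clogic.taut simp: ctaut_def)
next
  case (insert f F)
  have "CImp f g \<in> clogic Ax"
    by (rule insert.IH) (use insert.prems in auto)
  moreover have "f \<in> clogic Ax" using insert.prems by auto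
  ultimately show ?case by (rule clogic.mp[rotated])
qed

lemma L_sem0: "(\<And>v. ceval v g) \<Longrightarrow> g \<in> clogic Ax"
  using L_sem[of "{}"] by auto

lemma L_sem1: "a \<in> clogic Ax \<Longrightarrow> (\<And>v. ceval v a \<Longrightarrow> ceval v g) \<Longrightarrow> g \<in> clogic Ax"
  using L_sem[of "{a}"] by auto

lemma L_sem2: "a \<in> clogic Ax \<Longrightarrow> b \<in> clogic Ax \<Longrightarrow> (\<And>v. ceval v a \<Longrightarrow> ceval v b \<Longrightarrow> ceval v g) \<Longrightarrow> g \<in> clogic Ax"
  using L_sem[of "{a,b}"] by auto

lemma L_sem3: "a \<in> clogic Ax \<Longrightarrow> b \<in> clogic Ax \<Longrightarrow> c \<in> clogic Ax \<Longrightarrow>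
   (\<And>v. ceval v a \<Longrightarrow> ceval v b \<Longrightarrow> ceval v c \<Longrightarrow> ceval v g) \<Longrightarrow> g \<in> clogic Ax"
  using L_sem[of "{a,b,c}"] by auto

section \<open>The seven conditional logics\<close>

datatype lg = LgE | LgEN | LgM | LgMN | LgMC | LgK | LgKID

fun lax :: "lg \<Rightarrow> cfm set" where
  "lax LgE = {}"
| "lax LgEN = axCN"
| "lax LgM = axCM"
| "lax LgMN = axCM \<union> axCN"
| "lax LgMC = axCM \<union> axCC"
| "lax LgK = axCM \<union> axCC \<union> axCN"
| "lax LgKID = axCM \<union> axCC \<union> axCN \<union> axID"

definition LL :: "lg \<Rightarrow> cfm set" where "LL g = clogic (lax g)"

fun eqf :: "lg \<Rightarrow> bool" where
  "eqf LgE = True" | "eqf LgEN = True" | "eqf _ = False"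

fun Nf :: "lg \<Rightarrow> nat \<Rightarrow> bool" where
  "Nf LgE n = (n = 1)"
| "Nf LgEN n = (n \<le> 1)"
| "Nf LgM n = (n = 1)"
| "Nf LgMN n = (n \<le> 1)"
| "Nf LgMC n = (n \<ge> 1)"
| "Nf LgK n = True"
| "Nf LgKID n = True"

fun idf :: "lg \<Rightarrow> bool" where
  "idf LgKID = True" | "idf _ = False"

definition idA :: "lg \<Rightarrow> cfm \<Rightarrow> cfm" where
  "idA g t = (if idf g then ant t else CTop)"

definition Rl :: "lg \<Rightarrow> cfm set \<Rightarrow> cfm \<Rightarrow> bool" where
  "Rl g ds t \<longleftrightarrow> finite ds \<and> isC t \<and> (\<forall>x\<in>ds. isC x \<and> CIff (ant x) (ant t) \<in> LL g) \<and>
     Nf g (card ds) \<and> CImp (CAnd (idA g t) (conjs (cns ` ds))) (cns t) \<in> LL g \<and>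
     (eqf g \<longrightarrow> CImp (cns t) (conjs (cns ` ds)) \<in> LL g)"

definition Rval :: "lg \<Rightarrow> (cfm \<Rightarrow> bool) \<Rightarrow> bool" where
  "Rval g v \<longleftrightarrow> (\<forall>ds t. Rl g ds t \<longrightarrow> (\<forall>x\<in>ds. v x) \<longrightarrow> v t)"

lemma Nf1[simp]: "Nf g (Suc 0)"
  by (cases g) auto

lemma LL_sem: "finite F \<Longrightarrow> F \<subseteq> LL g \<Longrightarrow> (\<And>v. (\<forall>f\<in>F. ceval v f) \<Longrightarrow> ceval v h) \<Longrightarrow> h \<in> LL g"
  unfolding LL_def by (rule L_sem)
lemma LL_sem0: "(\<And>v. ceval v h) \<Longrightarrow> h \<in> LL g"
  unfolding LL_def by (rule L_sem0)
lemma LL_sem1: "a \<in> LL g \<Longrightarrow> (\<And>v. ceval v a \<Longrightarrow> ceval v h) \<Longrightarrow> h \<in> LL g"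
  unfolding LL_def by (rule L_sem1)
lemma LL_sem2: "a \<in> LL g \<Longrightarrow> b \<in> LL g \<Longrightarrow> (\<And>v. ceval v a \<Longrightarrow> ceval v b \<Longrightarrow> ceval v h) \<Longrightarrow> h \<in> LL g"
  unfolding LL_def by (rule L_sem2)
lemma LL_sem3: "a \<in> LL g \<Longrightarrow> b \<in> LL g \<Longrightarrow> c \<in> LL g \<Longrightarrow>
   (\<And>v. ceval v a \<Longrightarrow> ceval v b \<Longrightarrow> ceval v c \<Longrightarrow> ceval v h) \<Longrightarrow> h \<in> LL g"
  unfolding LL_def by (rule L_sem3)

lemma LL_re: "CIff a a' \<in> LL g \<Longrightarrow> CIff b b' \<in> LL g \<Longrightarrow> CImp (Cond a b) (Cond a' b') \<in> LL g"
  unfolding LL_def by (rule clogic.re)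

lemma LL_ax: "f \<in> lax g \<Longrightarrow> f \<in> LL g"
  unfolding LL_def by (rule clogic.ax)

lemma Rl_refl: "isC x \<Longrightarrow> Rl g {x} x"
  unfolding Rl_def idA_def by (auto intro!: LL_sem0)

section \<open>Soundness w.r.t. R-valuations\<close>

lemma ax_sound:
  assumes "f \<in> lax g" "Rval g v" shows "ceval v f"
proof -
  have CM: "ceval v f" if "f \<in> axCM" "\<not> eqf g" for f
  proof -
    obtain a b c where f: "f = CImp (Cond a (CAnd b c)) (CAnd (Cond a b) (Cond a c))"
      using \<open>f \<in> axCM\<close> unfolding axCM_def by blast
    have "Rl g {Cond a (CAnd b c)} (Cond a b)" "Rl g {Cond a (CAnd b c)} (Cond a c)"
      using that(2) unfolding Rl_def idA_def by (auto intro!: LL_sem0)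
    then show ?thesis using assms(2) unfolding f Rval_def by fastforce
  qed
  have CC: "ceval v f" if "f \<in> axCC" "Nf g 2" "Nf g 1" "\<not> eqf g" for f
  proof -
    obtain a b c where f: "f = CImp (CAnd (Cond a b) (Cond a c)) (Cond a (CAnd b c))"
      using \<open>f \<in> axCC\<close> unfolding axCC_def by blast
    have "card {Cond a b, Cond a c} = 2 \<or> card {Cond a b, Cond a c} = 1"
      by (cases "b = c") auto
    then have "Nf g (card {Cond a b, Cond a c})" using that by auto
    then have "Rl g {Cond a b, Cond a c} (Cond a (CAnd b c))"
      using that unfolding Rl_def idA_def by (auto intro!: LL_sem0)
    then show ?thesis using assms(2) unfolding f Rval_def by fastforce
  qed
  have CN: "ceval v f" if "f \<in> axCN" "Nf g 0" for f
  proof -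
    obtain a where f: "f = Cond a CTop"
      using \<open>f \<in> axCN\<close> unfolding axCN_def by blast
    have "Rl g {} (Cond a CTop)"
      using that unfolding Rl_def idA_def by (auto intro!: LL_sem0)
    then show ?thesis using assms(2) unfolding f Rval_def by fastforce
  qed
  have ID: "ceval v f" if "f \<in> axID" "idf g" "Nf g 0" "\<not> eqf g" for f
  proof -
    obtain a where f: "f = Cond a a"
      using \<open>f \<in> axID\<close> unfolding axID_def by blast
    have "Rl g {} (Cond a a)"
      using that unfolding Rl_def idA_def by (auto intro!: LL_sem0)
    then show ?thesis using assms(2) unfolding f Rval_def by fastforce
  qed
  show ?thesis using assms(1) CM CC CN ID by (cases g) auto
qed

lemma LL_sound: "f \<in> LL g \<Longrightarrow> Rval g v \<Longrightarrow> ceval v f"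
  unfolding LL_def
proof (induction rule: clogic.induct)
  case (taut f)
  then show ?case by (simp add: ctaut_def)
next
  case (ax f)
  then show ?case using ax_sound by blast
next
  case (mp f g')
  then show ?case by simp
next
  case (re f0 f1 g0 g1)
  have "Rl g {Cond f0 g0} (Cond f1 g1)"
    unfolding Rl_def idA_def
    using re.hyps unfolding LL_def[symmetric]
    by (auto intro!: LL_sem1[of "CIff g0 g1"])
  then show ?case using re.prems unfolding Rval_def by fastforce
qed




lemma ceval_isC: "isC x \<Longrightarrow> ceval v x = v x"
  by (cases x) auto

lemma LL_iff_refl: "CIff a a \<in> LL g" by (rule LL_sem0) simp

lemma LL_mono_cond:
  assumes "axCM \<subseteq> lax g" "CImp b c \<in> LL g"
  shows "CImp (Cond a b) (Cond a c) \<in> LL g"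
proof -
  have "CIff b (CAnd c b) \<in> LL g" by (rule LL_sem1[OF assms(2)]) auto
  then have 1: "CImp (Cond a b) (Cond a (CAnd c b)) \<in> LL g" by (rule LL_re[OF LL_iff_refl])
  have 2: "CImp (Cond a (CAnd c b)) (CAnd (Cond a c) (Cond a b)) \<in> LL g"
    by (rule LL_ax) (use assms(1) in \<open>auto simp: axCM_def\<close>)
  show ?thesis by (rule LL_sem2[OF 1 2]) auto
qed

lemma LL_cc:
  assumes "axCC \<subseteq> lax g" "finite S" "S \<noteq> {}"
  shows "CImp (conjs ((\<lambda>b. Cond a b) ` S)) (Cond a (conjs S)) \<in> LL g"
  using assms(2,3)
proof (induction S rule: finite_ne_induct)
  case (singleton b)
  have "CIff b (conjs {b}) \<in> LL g" by (rule LL_sem0) simp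
  then have "CImp (Cond a b) (Cond a (conjs {b})) \<in> LL g" by (rule LL_re[OF LL_iff_refl])
  then show ?case by (rule LL_sem1) simp
next
  case (insert b S)
  have 2: "CImp (CAnd (Cond a b) (Cond a (conjs S))) (Cond a (CAnd b (conjs S))) \<in> LL g"
    by (rule LL_ax) (use assms(1) in \<open>auto simp: axCC_def\<close>)
  have "CIff (CAnd b (conjs S)) (conjs (insert b S)) \<in> LL g"
    by (rule LL_sem0) (use insert in auto)
  then have 3: "CImp (Cond a (CAnd b (conjs S))) (Cond a (conjs (insert b S))) \<in> LL g"
    by (rule LL_re[OF LL_iff_refl])
  show ?case by (rule LL_sem3[OF insert.IH 2 3]) (use insert in auto)
qed

lemma LL_nec:
  assumes "axCN \<subseteq> lax g" "c \<in> LL g"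
  shows "Cond a c \<in> LL g"
proof -
  have 1: "Cond a CTop \<in> LL g" by (rule LL_ax) (use assms(1) in \<open>auto simp: axCN_def\<close>)
  have "CIff CTop c \<in> LL g" by (rule LL_sem1[OF assms(2)]) auto
  then have 2: "CImp (Cond a CTop) (Cond a c) \<in> LL g" by (rule LL_re[OF LL_iff_refl])
  show ?thesis by (rule LL_sem2[OF 1 2]) auto
qed

lemma card1E: "card ds = Suc 0 \<Longrightarrow> (\<And>x. ds = {x} \<Longrightarrow> P) \<Longrightarrow> P"
  by (metis card_1_singletonE One_nat_def)

lemma deriv_core:
  assumes R: "Rl g ds t"
  shows "CImp (conjs ((\<lambda>b. Cond (ant t) b) ` (cns ` ds))) (Cond (ant t) (cns t)) \<in> LL g"
proof -
  define a where "a = ant t"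
  define c where "c = cns t"
  define S where "S = cns ` ds"
  have fin: "finite ds" "finite S" using R unfolding Rl_def S_def by auto
  have I: "CImp (CAnd (idA g t) (conjs S)) c \<in> LL g" and N: "Nf g (card ds)"
    and E: "eqf g \<Longrightarrow> CImp c (conjs S) \<in> LL g"
    using R unfolding Rl_def S_def c_def by auto
  have empty_case: "Cond a c \<in> LL g" if "ds = {}" "\<not> idf g" "axCN \<subseteq> lax g"
  proof -
    have "c \<in> LL g" by (rule LL_sem1[OF I]) (use that in \<open>auto simp: S_def idA_def\<close>)
    then show ?thesis by (rule LL_nec[OF that(3)])
  qed
  have one_eq: "CImp (Cond a (cns x)) (Cond a c) \<in> LL g" if "ds = {x}" "eqf g" "\<not> idf g" for x
  proof -
    have "CIff (cns x) c \<in> LL g"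
      by (rule LL_sem2[OF I E[OF that(2)]]) (use that in \<open>auto simp: S_def idA_def\<close>)
    then show ?thesis by (rule LL_re[OF LL_iff_refl])
  qed
  have one_mono: "CImp (Cond a (cns x)) (Cond a c) \<in> LL g" if "ds = {x}" "axCM \<subseteq> lax g" "\<not> idf g" for x
  proof -
    have "CImp (cns x) c \<in> LL g"
      by (rule LL_sem1[OF I]) (use that in \<open>auto simp: S_def idA_def\<close>)
    then show ?thesis by (rule LL_mono_cond[OF that(2)])
  qed
  have many: "CImp (conjs ((\<lambda>b. Cond a b) ` S)) (Cond a c) \<in> LL g"
    if "ds \<noteq> {}" "axCM \<subseteq> lax g" "axCC \<subseteq> lax g" "\<not> idf g"
  proof -
    have 1: "CImp (conjs ((\<lambda>b. Cond a b) ` S)) (Cond a (conjs S)) \<in> LL g"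
      by (rule LL_cc[OF that(3) fin(2)]) (use that in \<open>auto simp: S_def\<close>)
    have "CImp (conjs S) c \<in> LL g"
      by (rule LL_sem1[OF I]) (use that fin in \<open>auto simp: idA_def\<close>)
    then have 2: "CImp (Cond a (conjs S)) (Cond a c) \<in> LL g" by (rule LL_mono_cond[OF that(2)])
    show ?thesis by (rule LL_sem2[OF 1 2]) (use fin in auto)
  qed
  have idcase: "CImp (conjs ((\<lambda>b. Cond a b) ` S)) (Cond a c) \<in> LL g" if "g = LgKID"
  proof -
    have ax: "axCM \<subseteq> lax g" "axCC \<subseteq> lax g" "Cond a a \<in> LL g"
      using that by (auto intro!: LL_ax simp: axID_def)
    have 1: "CImp (conjs ((\<lambda>b. Cond a b) ` insert a S)) (Cond a (conjs (insert a S))) \<in> LL g"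
      by (rule LL_cc[OF ax(2)]) (use fin in auto)
    have "CImp (conjs (insert a S)) c \<in> LL g"
      by (rule LL_sem1[OF I]) (use that fin in \<open>auto simp: idA_def a_def\<close>)
    then have 2: "CImp (Cond a (conjs (insert a S))) (Cond a c) \<in> LL g" by (rule LL_mono_cond[OF ax(1)])
    show ?thesis by (rule LL_sem3[OF 1 2 ax(3)]) (use fin in auto)
  qed
  have "CImp (conjs ((\<lambda>b. Cond a b) ` S)) (Cond a c) \<in> LL g"
  proof (cases g)
    case LgE
    then have "card ds = Suc 0" using N by simp
    then obtain x where "ds = {x}" by (rule card1E)
    then show ?thesis using one_eq[of x] LgE by (auto intro: LL_sem1 simp: S_def)
  next
    case LgEN
    then have "card ds = 0 \<or> card ds = Suc 0" using N by auto
    then show ?thesis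
    proof
      assume "card ds = 0"
      then have "ds = {}" using fin by simp
      then show ?thesis using empty_case LgEN by (auto intro: LL_sem1)
    next
      assume "card ds = Suc 0"
      then obtain x where "ds = {x}" by (rule card1E)
      then show ?thesis using one_eq[of x] LgEN by (auto intro: LL_sem1 simp: S_def)
    qed
  next
    case LgM
    then have "card ds = Suc 0" using N by simp
    then obtain x where "ds = {x}" by (rule card1E)
    then show ?thesis using one_mono[of x] LgM by (auto intro: LL_sem1 simp: S_def)
  next
    case LgMN
    then have "card ds = 0 \<or> card ds = Suc 0" using N by auto
    then show ?thesis
    proof
      assume "card ds = 0"
      then have "ds = {}" using fin by simp
      then show ?thesis using empty_case LgMN by (auto intro: LL_sem1)
    next
      assume "card ds = Suc 0"
      then obtain x where "ds = {x}" by (rule card1E)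
      then show ?thesis using one_mono[of x] LgMN by (auto intro: LL_sem1 simp: S_def)
    qed
  next
    case LgMC
    then have "ds \<noteq> {}" using N by auto
    then show ?thesis using many LgMC by auto
  next
    case LgK
    show ?thesis
    proof (cases "ds = {}")
      case True
      then show ?thesis using empty_case LgK by (auto intro: LL_sem1)
    next
      case False
      then show ?thesis using many LgK by auto
    qed
  next
    case LgKID
    then show ?thesis using idcase by auto
  qed
  then show ?thesis unfolding a_def c_def S_def .
qed

lemma deriv:
  assumes R: "Rl g ds t"
  shows "CImp (conjs ds) t \<in> LL g"
proof -
  have fin: "finite ds" and tC: "isC t" and A: "\<forall>x\<in>ds. isC x \<and> CIff (ant x) (ant t) \<in> LL g"
    using R unfolding Rl_def by auto
  define P where "P = (\<lambda>x. CImp x (Cond (ant t) (cns x))) ` ds"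
  have P: "P \<subseteq> LL g"
  proof
    fix f assume "f \<in> P"
    then obtain x where x: "x \<in> ds" "f = CImp x (Cond (ant t) (cns x))" unfolding P_def by blast
    have "CImp (Cond (ant x) (cns x)) (Cond (ant t) (cns x)) \<in> LL g"
      using A x(1) LL_re LL_iff_refl by blast
    then show "f \<in> LL g" using x A isC_eq by metis
  qed
  have core: "CImp (conjs ((\<lambda>b. Cond (ant t) b) ` (cns ` ds))) (Cond (ant t) (cns t)) \<in> LL g"
    by (rule deriv_core[OF R])
  show ?thesis
  proof (rule LL_sem[of "insert _ P"])
    show "finite (insert (CImp (conjs ((\<lambda>b. Cond (ant t) b) ` (cns ` ds))) (Cond (ant t) (cns t))) P)"
      using fin unfolding P_def by simp
    show "insert (CImp (conjs ((\<lambda>b. Cond (ant t) b) ` (cns ` ds))) (Cond (ant t) (cns t))) P \<subseteq> LL g"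
      using core P by simp
  next
    fix v
    assume H: "\<forall>f\<in>insert (CImp (conjs ((\<lambda>b. Cond (ant t) b) ` (cns ` ds))) (Cond (ant t) (cns t))) P. ceval v f"
    show "ceval v (CImp (conjs ds) t)"
    proof (simp add: fin, intro impI)
      assume "\<forall>x\<in>ds. ceval v x"
      then have "\<forall>x\<in>ds. ceval v (Cond (ant t) (cns x))" using H unfolding P_def by auto
      then have "ceval v (Cond (ant t) (cns t))" using H fin by auto
      then show "ceval v t" using isC_eq[OF tC] by metis
    qed
  qed
qed

lemma RlD: assumes "Rl g ds t"
  shows "finite ds" "isC t" "\<forall>x\<in>ds. isC x \<and> CIff (ant x) (ant t) \<in> LL g" "Nf g (card ds)"
    "CImp (CAnd (idA g t) (conjs (cns ` ds))) (cns t) \<in> LL g"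
    "eqf g \<Longrightarrow> CImp (cns t) (conjs (cns ` ds)) \<in> LL g"
  using assms unfolding Rl_def by blast+

lemma Rl_trans:
  assumes R: "Rl g es t" and H: "\<forall>e\<in>es. Rl g (h e) e"
  shows "Rl g (\<Union>e\<in>es. h e) t"
proof -
  have fes: "finite es" and tC: "isC t" and A: "\<forall>x\<in>es. isC x \<and> CIff (ant x) (ant t) \<in> LL g"
    and N: "Nf g (card es)" and I: "CImp (CAnd (idA g t) (conjs (cns ` es))) (cns t) \<in> LL g"
    and E: "eqf g \<longrightarrow> CImp (cns t) (conjs (cns ` es)) \<in> LL g"
    using RlD[OF R] by blast+
  have fh: "\<forall>e\<in>es. finite (h e)" using H RlD(1) by blast
  let ?U = "\<Union>e\<in>es. h e"
  have fU: "finite ?U" using fes fh by auto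
  have AU: "\<forall>x\<in>?U. isC x \<and> CIff (ant x) (ant t) \<in> LL g"
  proof
    fix x assume "x \<in> ?U"
    then obtain e where e: "e \<in> es" "x \<in> h e" by blast
    have "isC x \<and> CIff (ant x) (ant e) \<in> LL g" using H e RlD(3) by blast
    moreover have "CIff (ant e) (ant t) \<in> LL g" using A e by auto
    ultimately show "isC x \<and> CIff (ant x) (ant t) \<in> LL g"
      using LL_sem2[of "CIff (ant x) (ant e)" g "CIff (ant e) (ant t)" "CIff (ant x) (ant t)"] by auto
  qed
  have Nh: "\<forall>e\<in>es. Nf g (card (h e))" using H RlD(4) by blast
  have NU: "Nf g (card ?U)"
  proof (cases g)
    case LgE
    then have "card es = Suc 0" using N by simp
    then obtain e where "es = {e}" by (rule card1E)
    then show ?thesis using Nh LgE by simp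
  next
    case LgM
    then have "card es = Suc 0" using N by simp
    then obtain e where "es = {e}" by (rule card1E)
    then show ?thesis using Nh LgM by simp
  next
    case LgEN
    have le: "card es \<le> 1" using N LgEN by simp
    show ?thesis
    proof (cases "card es = 0")
      case True
      then have "es = {}" using fes by simp
      then show ?thesis using LgEN by simp
    next
      case False
      then have "card es = Suc 0" using le by simp
      then obtain e where "es = {e}" by (rule card1E)
      then show ?thesis using Nh LgEN by simp
    qed
  next
    case LgMN
    have le: "card es \<le> 1" using N LgMN by simp
    show ?thesis
    proof (cases "card es = 0")
      case True
      then have "es = {}" using fes by simp
      then show ?thesis using LgMN by simp
    next
      case False
      then have "card es = Suc 0" using le by simp
      then obtain e where "es = {e}" by (rule card1E)
      then show ?thesis using Nh LgMN by simp
    qed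
  next
    case LgMC
    then obtain e where e: "e \<in> es" using N by fastforce
    then have "Nf g (card (h e))" using Nh by blast
    then have "h e \<noteq> {}" using LgMC by auto
    then have "?U \<noteq> {}" using e by auto
    then show ?thesis using LgMC fU by (simp add: Suc_leI card_gt_0_iff)
  next
    case LgK
    then show ?thesis by simp
  next
    case LgKID
    then show ?thesis by simp
  qed
  have IU: "CImp (CAnd (idA g t) (conjs (cns ` ?U))) (cns t) \<in> LL g"
  proof -
    define F where "F = insert (CImp (CAnd (idA g t) (conjs (cns ` es))) (cns t))
        ((\<lambda>e. CImp (CAnd (idA g e) (conjs (cns ` h e))) (cns e)) ` es \<union> (\<lambda>e. CIff (ant e) (ant t)) ` es)"
    show ?thesis
    proof (rule LL_sem[of F])
      show "finite F" unfolding F_def using fes by auto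
      show "F \<subseteq> LL g" unfolding F_def using I A H RlD(5) by blast
    next
      fix v assume V: "\<forall>f\<in>F. ceval v f"
      have key: "ceval v (cns t)" if it: "ceval v (idA g t)" and cu: "\<forall>x\<in>?U. ceval v (cns x)"
      proof -
        have "\<forall>e\<in>es. ceval v (cns e)"
        proof
          fix e assume e: "e \<in> es"
          have "ceval v (CIff (ant e) (ant t))" using V e unfolding F_def by blast
          then have "ceval v (idA g e)" using it unfolding idA_def by (cases "idf g") auto
          moreover have "\<forall>x\<in>h e. ceval v (cns x)" using cu e by auto
          moreover have "ceval v (CImp (CAnd (idA g e) (conjs (cns ` h e))) (cns e))"
            using V e unfolding F_def by blast
          ultimately show "ceval v (cns e)" using fh e by auto
        qed
        moreover have "ceval v (CImp (CAnd (idA g t) (conjs (cns ` es))) (cns t))"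
          using V unfolding F_def by blast
        ultimately show "ceval v (cns t)" using it fes by auto
      qed
      show "ceval v (CImp (CAnd (idA g t) (conjs (cns ` ?U))) (cns t))"
        using key fU by auto
    qed
  qed
  have EU: "eqf g \<longrightarrow> CImp (cns t) (conjs (cns ` ?U)) \<in> LL g"
  proof
    assume eq: "eqf g"
    define F where "F = insert (CImp (cns t) (conjs (cns ` es)))
        ((\<lambda>e. CImp (cns e) (conjs (cns ` h e))) ` es)"
    show "CImp (cns t) (conjs (cns ` ?U)) \<in> LL g"
    proof (rule LL_sem[of F])
      show "finite F" unfolding F_def using fes by auto
      show "F \<subseteq> LL g" unfolding F_def using E eq H RlD(6) by blast
    next
      fix v assume V: "\<forall>f\<in>F. ceval v f"
      have key: "\<forall>x\<in>?U. ceval v (cns x)" if ct: "ceval v (cns t)"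
      proof
        fix x assume "x \<in> ?U"
        then obtain e where e: "e \<in> es" "x \<in> h e" by blast
        have "ceval v (CImp (cns t) (conjs (cns ` es)))" using V unfolding F_def by blast
        then have "ceval v (cns e)" using ct fes e by auto
        moreover have "ceval v (CImp (cns e) (conjs (cns ` h e)))" using V e unfolding F_def by blast
        ultimately show "ceval v (cns x)" using fh e by auto
      qed
      show "ceval v (CImp (cns t) (conjs (cns ` ?U)))"
        using key fU by auto
    qed
  qed
  show ?thesis unfolding Rl_def using fU tC AU NU IU EU by (intro conjI) simp_all
qed

lemma LL_complete:
  assumes V: "\<And>v. Rval g v \<Longrightarrow> ceval v f"
  shows "f \<in> LL g"
proof -
  define C where "C = {x \<in> occ True f \<union> occ False f. isC x}"
  have fC: "finite C" unfolding C_def by auto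
  define Q where "Q = {(ds, t). ds \<subseteq> C \<and> t \<in> C \<and> Rl g ds t}"
  define F where "F = (\<lambda>(ds, t). CImp (conjs ds) t) ` Q"
  have fF: "finite F"
  proof -
    have sub: "Q \<subseteq> Pow C \<times> C" unfolding Q_def by auto
    have "finite (Pow C \<times> C)" using fC by simp
    then have "finite Q" using finite_subset[OF sub] by blast
    then show ?thesis unfolding F_def by simp
  qed
  have FL: "F \<subseteq> LL g" unfolding F_def Q_def using deriv by auto
  show ?thesis
  proof (rule LL_sem[OF fF FL])
    fix v0 assume V0: "\<forall>h\<in>F. ceval v0 h"
    define v where "v x = (if isC x then \<exists>ds. ds \<subseteq> C \<and> (\<forall>y\<in>ds. v0 y) \<and> Rl g ds x else v0 x)" for x
    have Rv: "Rval g v"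
      unfolding Rval_def
    proof (intro allI impI)
      fix es t assume R: "Rl g es t" and T: "\<forall>x\<in>es. v x"
      have esC: "\<forall>x\<in>es. isC x" using RlD(3)[OF R] by blast
      have "\<forall>e\<in>es. \<exists>ds. ds \<subseteq> C \<and> (\<forall>y\<in>ds. v0 y) \<and> Rl g ds e"
        using T esC unfolding v_def by auto
      then have "\<exists>h. \<forall>e\<in>es. h e \<subseteq> C \<and> (\<forall>y\<in>h e. v0 y) \<and> Rl g (h e) e" by (rule bchoice)
      then obtain h where h: "\<forall>e\<in>es. h e \<subseteq> C \<and> (\<forall>y\<in>h e. v0 y) \<and> Rl g (h e) e" by blast
      have "Rl g (\<Union>e\<in>es. h e) t" using Rl_trans[OF R] h by blast
      moreover have "(\<Union>e\<in>es. h e) \<subseteq> C" "\<forall>y\<in>(\<Union>e\<in>es. h e). v0 y" using h by auto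
      moreover have "isC t" using RlD(2)[OF R] .
      ultimately show "v t" unfolding v_def by auto
    qed
    have agree: "\<forall>x\<in>occ True f \<union> occ False f. v x = v0 x"
    proof
      fix x assume x: "x \<in> occ True f \<union> occ False f"
      show "v x = v0 x"
      proof (cases "isC x")
        case True
        then have xC: "x \<in> C" unfolding C_def using x by auto
        show ?thesis
        proof
          assume "v x"
          then obtain ds where ds: "ds \<subseteq> C" "\<forall>y\<in>ds. v0 y" "Rl g ds x" unfolding v_def using True by auto
          then have "(ds, x) \<in> Q" unfolding Q_def using xC by auto
          then have "CImp (conjs ds) x \<in> F" unfolding F_def by force
          then have "ceval v0 (CImp (conjs ds) x)" using V0 by blast
          moreover have "finite ds" using RlD(1)[OF ds(3)] .
          moreover have "\<forall>y\<in>ds. ceval v0 y" using ds(2) ds(1) ceval_isC unfolding C_def by auto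
          ultimately show "v0 x" using ceval_isC[OF True] by auto
        next
          assume "v0 x"
          then show "v x" unfolding v_def using True xC Rl_refl[OF True] by auto
        qed
      qed (simp add: v_def)
    qed
    have "ceval v f" using V[OF Rv] .
    then show "ceval v0 f" using occ_agree[OF agree] by simp
  qed
qed

theorem Lchar: "f \<in> LL g \<longleftrightarrow> (\<forall>v. Rval g v \<longrightarrow> ceval v f)"
  using LL_sound LL_complete by blast




definition ent :: "lg \<Rightarrow> cfm \<Rightarrow> cfm \<Rightarrow> bool" where
  "ent g a b \<longleftrightarrow> (\<forall>v. Rval g v \<longrightarrow> ceval v a \<longrightarrow> ceval v b)"

definition Uprop :: "lg \<Rightarrow> nat \<Rightarrow> bool \<Rightarrow> cfm \<Rightarrow> cfm \<Rightarrow> bool" where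
  "Uprop g p b f A \<longleftrightarrow> p \<notin> cV b A \<and> (\<forall>d. cV d A \<subseteq> cV d f) \<and> ent g A f \<and>
     (\<forall>\<psi>. p \<notin> cV b \<psi> \<longrightarrow> ent g \<psi> f \<longrightarrow> ent g \<psi> A)"

lemma LL_imp_ent: "CImp a b \<in> LL g \<longleftrightarrow> ent g a b"
  unfolding ent_def Lchar by simp

lemma isC_cV: "isC x \<Longrightarrow> cV b x = cV (\<not> b) (ant x) \<union> cV b (cns x)"
  by (cases x) auto

lemma isC_depth: "isC x \<Longrightarrow> cdepth (ant x) < cdepth x \<and> cdepth (cns x) < cdepth x"
  by (cases x) auto

lemma occ_ceval: "x \<in> occ b f \<Longrightarrow> ceval w x = w x"
  using occ_atom_or_C[of x b f] ceval_isC by auto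

lemma ceval_idA: "ceval v (idA g t) = (idf g \<longrightarrow> ceval v (ant t))"
  unfolding idA_def by auto

lemma Rl_sem:
  "Rl g ds t \<longleftrightarrow> finite ds \<and> isC t \<and> (\<forall>x\<in>ds. isC x \<and> (\<forall>v. Rval g v \<longrightarrow> ceval v (ant x) = ceval v (ant t))) \<and>
     Nf g (card ds) \<and>
     (\<forall>v. Rval g v \<longrightarrow> (idf g \<longrightarrow> ceval v (ant t)) \<longrightarrow> (\<forall>x\<in>ds. ceval v (cns x)) \<longrightarrow> ceval v (cns t)) \<and>
     (eqf g \<longrightarrow> (\<forall>v. Rval g v \<longrightarrow> ceval v (cns t) \<longrightarrow> (\<forall>x\<in>ds. ceval v (cns x))))"
proof (cases "finite ds")
  case True
  show ?thesis unfolding Rl_def Lchar using True by (simp add: ceval_idA, blast)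
next
  case False
  then show ?thesis unfolding Rl_def by simp
qed

definition Pp :: "nat \<Rightarrow> bool \<Rightarrow> cfm set" where "Pp p pol = {x. p \<notin> cV pol x}"
definition Pm :: "nat \<Rightarrow> bool \<Rightarrow> cfm set" where "Pm p pol = {x. p \<notin> cV (\<not> pol) x}"

definition pn :: "(bool \<Rightarrow> cfm \<Rightarrow> cfm) \<Rightarrow> bool \<Rightarrow> cfm set \<Rightarrow> cfm" where
  "pn Qf pol X = Cond (Qf pol (ant (SOME x. x \<in> X))) (neg (Qf pol (neg (conjs (cns ` X)))))"
definition ph1 :: "(bool \<Rightarrow> cfm \<Rightarrow> cfm) \<Rightarrow> bool \<Rightarrow> cfm set \<Rightarrow> cfm \<Rightarrow> cfm" where
  "ph1 Qf pol X d = Cond (Qf (\<not> pol) (ant d)) (Qf pol (CImp (conjs (cns ` X)) (cns d)))"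
definition ph2 :: "(bool \<Rightarrow> cfm \<Rightarrow> cfm) \<Rightarrow> bool \<Rightarrow> cfm set \<Rightarrow> cfm \<Rightarrow> cfm" where
  "ph2 Qf pol X d = Cond (Qf (\<not> pol) (ant d)) (Qf pol (CImp (CAnd (ant d) (conjs (cns ` X))) (cns d)))"

lemma small_lg: "g \<in> {LgE, LgEN, LgM, LgMN} \<Longrightarrow> Nf g k \<Longrightarrow> k \<le> 1"
  by (cases g) auto
lemma big_lg: "g \<notin> {LgE, LgEN, LgM, LgMN} \<Longrightarrow> \<not> eqf g \<and> (\<forall>k\<ge>1. Nf g k)"
  by (cases g) auto
lemma eq_lg: "eqf g \<Longrightarrow> \<not> idf g" by (cases g) auto
lemma small_noid: "g \<in> {LgE, LgEN, LgM, LgMN} \<Longrightarrow> \<not> idf g" by (cases g) auto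

lemma conjs_depth_lt:
  assumes "finite X" "\<forall>x\<in>X. isC x \<and> cdepth x \<le> n" "X \<noteq> {} \<or> 0 < n"
  shows "cdepth (conjs (cns ` X)) < n"
proof -
  have pos: "0 < n" using assms isC_depth by fastforce
  have "\<forall>y\<in>cns ` X. cdepth y \<le> n - 1" using assms(2) isC_depth by fastforce
  then have "cdepth (conjs (cns ` X)) \<le> n - 1" using assms(1) by (intro cdepth_conjs) auto
  then show ?thesis using pos by linarith
qed




lemma Uprop_ent: "Uprop g p b f A \<Longrightarrow> Rval g v \<Longrightarrow> ceval v A \<Longrightarrow> ceval v f"
  unfolding Uprop_def ent_def by blast

lemma Uprop_univ: "Uprop g p b f A \<Longrightarrow> p \<notin> cV b \<psi> \<Longrightarrow> ent g \<psi> f \<Longrightarrow> ent g \<psi> A"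
  unfolding Uprop_def by blast

lemma Uprop_pfree: "Uprop g p b f A \<Longrightarrow> p \<notin> cV b A"
  unfolding Uprop_def by blast

lemma Uprop_vars: "Uprop g p b f A \<Longrightarrow> cV d A \<subseteq> cV d f"
  unfolding Uprop_def by blast

lemma Eprop_ent: "Uprop g p b (neg c) Q \<Longrightarrow> Rval g v \<Longrightarrow> ceval v c \<Longrightarrow> ceval v (neg Q)"
  using Uprop_ent[of g p b "neg c" Q v] by auto

lemma Eprop_univ:
  assumes "Uprop g p b (neg c) Q" "p \<notin> cV (\<not> b) \<psi>" "ent g c \<psi>"
  shows "ent g (neg Q) \<psi>"
proof -
  have "p \<notin> cV b (neg \<psi>)" using assms(2) by simp
  moreover have "ent g (neg \<psi>) (neg c)" using assms(3) unfolding ent_def by auto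
  ultimately have "ent g (neg \<psi>) Q" using Uprop_univ[OF assms(1)] by blast
  then show ?thesis unfolding ent_def by auto
qed

lemma some_mem: "X \<noteq> {} \<Longrightarrow> (SOME x. x \<in> X) \<in> X"
  by (simp add: some_in_eq)

lemma card_union_disj_ge: "finite Z \<Longrightarrow> finite X \<Longrightarrow> Z \<inter> X = {} \<Longrightarrow> card (Z \<union> X) = card Z + card X"
  by (simp add: card_Un_disjoint)

lemma OSIa:
  fixes Qf :: "bool \<Rightarrow> cfm \<Rightarrow> cfm"
  assumes QP: "\<And>b f. cdepth f < n \<Longrightarrow> Uprop g p b f (Qf b f)"
    and Zf: "finite Z" and ZP: "Z \<subseteq> Pp p pol"
    and Xf: "finite X'" and Xd: "\<forall>x\<in>X'. cdepth x \<le> n"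
    and eP: "e \<in> Pm p pol"
    and R: "Rl g (Z \<union> X') e"
  shows "Rl g Z e \<or> (\<exists>X''\<subseteq>X'. X'' \<noteq> {} \<and> pn Qf pol X'' \<in> Pm p pol \<and> Rl g X'' (pn Qf pol X'') \<and>
            (\<exists>Z'\<subseteq>Z. Rl g (insert (pn Qf pol X'') Z') e))"
proof (cases "X' \<subseteq> Z")
  case True
  then have "Z \<union> X' = Z" by auto
  then show ?thesis using R by auto
next
  case False
  define X1 where "X1 = X' - Z"
  have X1ne: "X1 \<noteq> {}" and X1sub: "X1 \<subseteq> X'" and fX1: "finite X1" and U: "Z \<union> X' = Z \<union> X1"
    and disj: "Z \<inter> X1 = {}" using False Xf unfolding X1_def by auto
  from R[unfolded Rl_sem] have
    eC: "isC e" and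
    A: "\<forall>x\<in>Z \<union> X'. isC x \<and> (\<forall>v. Rval g v \<longrightarrow> ceval v (ant x) = ceval v (ant e))" and
    N: "Nf g (card (Z \<union> X'))" and
    S: "\<forall>v. Rval g v \<longrightarrow> (idf g \<longrightarrow> ceval v (ant e)) \<longrightarrow> (\<forall>x\<in>Z \<union> X'. ceval v (cns x)) \<longrightarrow> ceval v (cns e)" and
    E: "eqf g \<longrightarrow> (\<forall>v. Rval g v \<longrightarrow> ceval v (cns e) \<longrightarrow> (\<forall>x\<in>Z \<union> X'. ceval v (cns x)))"
    by blast+
  define x0 where "x0 = (SOME x. x \<in> X1)"
  have x0: "x0 \<in> X1" unfolding x0_def using some_mem[OF X1ne] .
  define a0 where "a0 = ant x0"
  define c where "c = conjs (cns ` X1)"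
  define Q' where "Q' = Qf pol (neg c)"
  have pnd: "pn Qf pol X1 = Cond (Qf pol a0) (neg Q')" unfolding pn_def a0_def c_def x0_def Q'_def ..
  have X1C: "\<forall>x\<in>X1. isC x \<and> cdepth x \<le> n" using A Xd X1sub by auto
  have da0: "cdepth a0 < n" using X1C x0 isC_depth unfolding a0_def by fastforce
  have dc: "cdepth (neg c) < n" using conjs_depth_lt[OF fX1 X1C] X1ne unfolding c_def by simp
  have Ua: "Uprop g p pol a0 (Qf pol a0)" using QP da0 .
  have Uc: "Uprop g p pol (neg c) Q'" unfolding Q'_def using QP dc .
  have evc: "ceval v c = (\<forall>x\<in>X1. ceval v (cns x))" for v unfolding c_def using fX1 by simp
  have antE: "p \<notin> cV pol (ant e)" and cnsE: "p \<notin> cV (\<not> pol) (cns e)"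
    using eP isC_cV[OF eC, of "\<not> pol"] unfolding Pm_def by auto
  have Q1: "ceval v (Qf pol a0) = ceval v (ant e)" if Rv: "Rval g v" for v
  proof -
    have "ent g (ant e) a0" "ent g a0 (ant e)" using A x0 X1sub unfolding ent_def a0_def by auto
    then have "ent g (ant e) (Qf pol a0)" using Uprop_univ[OF Ua antE] by blast
    then show ?thesis using Uprop_ent[OF Ua Rv] \<open>ent g a0 (ant e)\<close> Rv unfolding ent_def by blast
  qed
  have pnPm: "pn Qf pol X1 \<in> Pm p pol"
    unfolding pnd Pm_def using Uprop_pfree[OF Ua] Uprop_pfree[OF Uc] by simp
  have antX1: "ceval v (ant x) = ceval v (ant e)" if "Rval g v" "x \<in> X1" for v x
    using A that X1sub by blast
  show ?thesis
  proof (cases "g \<in> {LgE, LgEN, LgM, LgMN}")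
    case True
    have noid: "\<not> idf g" using small_noid[OF True] .
    have "card (Z \<union> X1) \<le> 1" using small_lg[OF True] N U by simp
    moreover have "card (Z \<union> X1) = card Z + card X1" using Zf fX1 disj by (simp add: card_Un_disjoint)
    moreover have "card X1 \<ge> 1" using X1ne fX1 by (simp add: Suc_leI card_gt_0_iff)
    ultimately have "card Z = 0" "card X1 = 1" by auto
    then have Z0: "Z = {}" and X1s: "X1 = {x0}" using Zf x0 by (auto simp: card_1_singleton_iff)
    have ZX: "Z \<union> X' = {x0}" using U Z0 X1s by simp
    have ceX: "ent g c (cns e)"
      unfolding ent_def using S noid ZX evc X1s by auto
    have E2: "ent g (neg Q') (cns e)" using Eprop_univ[OF Uc _ ceX] cnsE by simp
    have R1: "Rl g X1 (pn Qf pol X1)"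
      unfolding Rl_sem pnd
    proof (intro conjI)
      show "finite X1" using fX1 .
      show "isC (Cond (Qf pol a0) (neg Q'))" by simp
      show "\<forall>x\<in>X1. isC x \<and> (\<forall>v. Rval g v \<longrightarrow> ceval v (ant x) = ceval v (ant (Cond (Qf pol a0) (neg Q'))))"
        using X1C antX1 Q1 by simp
      show "Nf g (card X1)" using X1s by simp
      show "\<forall>v. Rval g v \<longrightarrow> (idf g \<longrightarrow> ceval v (ant (Cond (Qf pol a0) (neg Q')))) \<longrightarrow>
          (\<forall>x\<in>X1. ceval v (cns x)) \<longrightarrow> ceval v (cns (Cond (Qf pol a0) (neg Q')))"
        using Eprop_ent[OF Uc] evc by simp
      show "eqf g \<longrightarrow> (\<forall>v. Rval g v \<longrightarrow> ceval v (cns (Cond (Qf pol a0) (neg Q'))) \<longrightarrow> (\<forall>x\<in>X1. ceval v (cns x)))"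
        using E2 E ZX X1s unfolding ent_def by simp
    qed
    have R2: "Rl g (insert (pn Qf pol X1) {}) e"
      unfolding Rl_sem pnd
    proof (intro conjI)
      show "finite (insert (Cond (Qf pol a0) (neg Q')) {})" by simp
      show "isC e" using eC .
      show "\<forall>x\<in>insert (Cond (Qf pol a0) (neg Q')) {}. isC x \<and> (\<forall>v. Rval g v \<longrightarrow> ceval v (ant x) = ceval v (ant e))"
        using Q1 by simp
      show "Nf g (card (insert (Cond (Qf pol a0) (neg Q')) {}))" by simp
      show "\<forall>v. Rval g v \<longrightarrow> (idf g \<longrightarrow> ceval v (ant e)) \<longrightarrow>
          (\<forall>x\<in>insert (Cond (Qf pol a0) (neg Q')) {}. ceval v (cns x)) \<longrightarrow> ceval v (cns e)"
        using E2 unfolding ent_def by simp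
      show "eqf g \<longrightarrow> (\<forall>v. Rval g v \<longrightarrow> ceval v (cns e) \<longrightarrow> (\<forall>x\<in>insert (Cond (Qf pol a0) (neg Q')) {}. ceval v (cns x)))"
        using E ZX Eprop_ent[OF Uc] evc X1s by simp
    qed
    show ?thesis using R1 R2 Z0 X1ne X1sub pnPm by blast
  next
    case False
    have noeq: "\<not> eqf g" and Nbig: "\<forall>k\<ge>1. Nf g k" using big_lg[OF False] by auto
    have R1: "Rl g X1 (pn Qf pol X1)"
      unfolding Rl_sem pnd
    proof (intro conjI)
      show "finite X1" using fX1 .
      show "isC (Cond (Qf pol a0) (neg Q'))" by simp
      show "\<forall>x\<in>X1. isC x \<and> (\<forall>v. Rval g v \<longrightarrow> ceval v (ant x) = ceval v (ant (Cond (Qf pol a0) (neg Q'))))"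
        using X1C antX1 Q1 by simp
      show "Nf g (card X1)" using Nbig X1ne fX1 by (simp add: Suc_leI card_gt_0_iff)
      show "\<forall>v. Rval g v \<longrightarrow> (idf g \<longrightarrow> ceval v (ant (Cond (Qf pol a0) (neg Q')))) \<longrightarrow>
          (\<forall>x\<in>X1. ceval v (cns x)) \<longrightarrow> ceval v (cns (Cond (Qf pol a0) (neg Q')))"
        using Eprop_ent[OF Uc] evc by simp
      show "eqf g \<longrightarrow> (\<forall>v. Rval g v \<longrightarrow> ceval v (cns (Cond (Qf pol a0) (neg Q'))) \<longrightarrow> (\<forall>x\<in>X1. ceval v (cns x)))"
        using noeq by simp
    qed
    define \<psi> where "\<psi> = CImp (CAnd (idA g e) (conjs (cns ` Z))) (cns e)"
    have ZPP: "\<forall>z\<in>Z. p \<notin> cV pol (cns z)"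
    proof
      fix z assume z: "z \<in> Z"
      then have "isC z" using A by auto
      then show "p \<notin> cV pol (cns z)" using ZP z isC_cV[of z pol] unfolding Pp_def by auto
    qed
    have psiP: "p \<notin> cV (\<not> pol) \<psi>"
      unfolding \<psi>_def idA_def using ZPP Zf antE cnsE by auto
    have cpsi: "ent g c \<psi>"
      unfolding ent_def \<psi>_def
    proof (intro allI impI)
      fix v assume Rv: "Rval g v" and cv: "ceval v c"
      show "ceval v (CImp (CAnd (idA g e) (conjs (cns ` Z))) (cns e))"
        using S Rv cv evc U Zf ceval_idA[of v g e] by auto
    qed
    have E2: "ent g (neg Q') \<psi>" using Eprop_univ[OF Uc _ cpsi] psiP by simp
    have R2: "Rl g (insert (pn Qf pol X1) Z) e"
      unfolding Rl_sem pnd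
    proof (intro conjI)
      show "finite (insert (Cond (Qf pol a0) (neg Q')) Z)" using Zf by simp
      show "isC e" using eC .
      show "\<forall>x\<in>insert (Cond (Qf pol a0) (neg Q')) Z. isC x \<and> (\<forall>v. Rval g v \<longrightarrow> ceval v (ant x) = ceval v (ant e))"
        using Q1 A by simp
      have "card (insert (Cond (Qf pol a0) (neg Q')) Z) \<ge> 1" using Zf by (simp add: Suc_leI card_gt_0_iff)
      then show "Nf g (card (insert (Cond (Qf pol a0) (neg Q')) Z))" using Nbig by blast
      show "\<forall>v. Rval g v \<longrightarrow> (idf g \<longrightarrow> ceval v (ant e)) \<longrightarrow>
          (\<forall>x\<in>insert (Cond (Qf pol a0) (neg Q')) Z. ceval v (cns x)) \<longrightarrow> ceval v (cns e)"
        using E2 Zf unfolding ent_def \<psi>_def by (simp add: ceval_idA)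
      show "eqf g \<longrightarrow> (\<forall>v. Rval g v \<longrightarrow> ceval v (cns e) \<longrightarrow> (\<forall>x\<in>insert (Cond (Qf pol a0) (neg Q')) Z. ceval v (cns x)))"
        using noeq by simp
    qed
    show ?thesis using R1 R2 X1ne X1sub pnPm by blast
  qed
qed


lemma OSIb:
  fixes Qf :: "bool \<Rightarrow> cfm \<Rightarrow> cfm"
  assumes QP: "\<And>b f. cdepth f < n \<Longrightarrow> Uprop g p b f (Qf b f)"
    and Zf: "finite Z" and ZP: "Z \<subseteq> Pp p pol"
    and Xf: "finite X'" and Xd: "\<forall>x\<in>X'. cdepth x \<le> n"
    and dd: "cdepth d \<le> n"
    and R: "Rl g (Z \<union> X') d"
  shows "(\<exists>X''\<subseteq>X'. Rl g X'' d) \<or> (\<exists>X''\<subseteq>X'. \<exists>h. (h = ph1 Qf pol X'' d \<or> h = ph2 Qf pol X'' d) \<and>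
            h \<in> Pp p pol \<and> (\<exists>Z'\<subseteq>Z. Rl g Z' h) \<and> Rl g (insert h X'') d)"
proof (cases "Z \<subseteq> X'")
  case True
  then have "Z \<union> X' = X'" by auto
  then show ?thesis using R by auto
next
  case False
  define Z1 where "Z1 = Z - X'"
  have Z1ne: "Z1 \<noteq> {}" and Z1sub: "Z1 \<subseteq> Z" and fZ1: "finite Z1" and U: "Z \<union> X' = Z1 \<union> X'"
    and disj: "Z1 \<inter> X' = {}" using False Zf unfolding Z1_def by auto
  from R[unfolded Rl_sem] have
    dC: "isC d" and
    A: "\<forall>x\<in>Z \<union> X'. isC x \<and> (\<forall>v. Rval g v \<longrightarrow> ceval v (ant x) = ceval v (ant d))" and
    N: "Nf g (card (Z \<union> X'))" and
    S: "\<forall>v. Rval g v \<longrightarrow> (idf g \<longrightarrow> ceval v (ant d)) \<longrightarrow> (\<forall>x\<in>Z \<union> X'. ceval v (cns x)) \<longrightarrow> ceval v (cns d)" and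
    E: "eqf g \<longrightarrow> (\<forall>v. Rval g v \<longrightarrow> ceval v (cns d) \<longrightarrow> (\<forall>x\<in>Z \<union> X'. ceval v (cns x)))"
    by blast+
  obtain z0 where z0: "z0 \<in> Z1" using Z1ne by blast
  have z0C: "isC z0" using A z0 Z1sub by auto
  have ZC: "\<forall>z\<in>Z. isC z" using A by auto
  have XC: "\<forall>x\<in>X'. isC x \<and> cdepth x \<le> n" using A Xd by auto
  have dpos: "0 < n" using isC_depth[OF dC] dd by linarith
  define ah where "ah = Qf (\<not> pol) (ant d)"
  have dad: "cdepth (ant d) < n" using isC_depth[OF dC] dd by linarith
  have dcd: "cdepth (cns d) < n" using isC_depth[OF dC] dd by linarith
  have Uah: "Uprop g p (\<not> pol) (ant d) ah" unfolding ah_def using QP dad .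
  have ZPP: "p \<notin> cV (\<not> pol) (ant z) \<and> p \<notin> cV pol (cns z)" if "z \<in> Z" for z
    using ZP that isC_cV[of z pol] ZC unfolding Pp_def by auto
  have Q1: "ceval v ah = ceval v (ant d)" if Rv: "Rval g v" for v
  proof -
    have "ent g (ant z0) (ant d)" "ent g (ant d) (ant z0)" using A z0 Z1sub unfolding ent_def by auto
    then have "ent g (ant z0) ah" using Uprop_univ[OF Uah] ZPP[of z0] z0 Z1sub by blast
    then show ?thesis using Uprop_ent[OF Uah Rv] \<open>ent g (ant d) (ant z0)\<close> Rv unfolding ent_def by blast
  qed
  have antX: "ceval v (ant x) = ceval v (ant d)" if "Rval g v" "x \<in> Z \<union> X'" for v x
    using A that by blast
  show ?thesis
  proof (cases "g \<in> {LgE, LgEN, LgM, LgMN}")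
    case True
    have noid: "\<not> idf g" using small_noid[OF True] .
    have "card (Z1 \<union> X') \<le> 1" using small_lg[OF True] N U by simp
    moreover have "card (Z1 \<union> X') = card Z1 + card X'" using fZ1 Xf disj by (simp add: card_Un_disjoint)
    moreover have "card Z1 \<ge> 1" using Z1ne fZ1 by (simp add: Suc_leI card_gt_0_iff)
    ultimately have "card X' = 0" "card Z1 = 1" by auto
    then have X0: "X' = {}" and Z1s: "Z1 = {z0}" using Xf z0 by (auto simp: card_1_singleton_iff)
    have ZX: "Z \<union> X' = {z0}" using U X0 Z1s by simp
    define f1 where "f1 = CImp (conjs (cns ` {})) (cns d)"
    define bh where "bh = Qf pol f1"
    have ph: "ph1 Qf pol {} d = Cond ah bh" unfolding ph1_def ah_def bh_def f1_def ..
    have df1: "cdepth f1 < n" unfolding f1_def using dcd cdepth_conjs[of "{}" 0] by simp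
    have Ub: "Uprop g p pol f1 bh" unfolding bh_def using QP df1 .
    have cz: "ent g (cns z0) f1" unfolding ent_def f1_def using S ZX noid by simp
    have zb: "ent g (cns z0) bh" using Uprop_univ[OF Ub _ cz] ZPP[of z0] z0 Z1sub by blast
    have dz: "eqf g \<Longrightarrow> ent g (cns d) (cns z0)" unfolding ent_def using E ZX by simp
    have hP: "Cond ah bh \<in> Pp p pol" unfolding Pp_def using Uprop_pfree[OF Uah] Uprop_pfree[OF Ub] by simp
    have R1: "Rl g {z0} (Cond ah bh)"
      unfolding Rl_sem
    proof (intro conjI)
      show "finite {z0}" by simp
      show "isC (Cond ah bh)" by simp
      show "\<forall>x\<in>{z0}. isC x \<and> (\<forall>v. Rval g v \<longrightarrow> ceval v (ant x) = ceval v (ant (Cond ah bh)))"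
        using z0C antX Q1 ZX by simp
      show "Nf g (card {z0})" by simp
      show "\<forall>v. Rval g v \<longrightarrow> (idf g \<longrightarrow> ceval v (ant (Cond ah bh))) \<longrightarrow>
          (\<forall>x\<in>{z0}. ceval v (cns x)) \<longrightarrow> ceval v (cns (Cond ah bh))"
        using zb unfolding ent_def by simp
      show "eqf g \<longrightarrow> (\<forall>v. Rval g v \<longrightarrow> ceval v (cns (Cond ah bh)) \<longrightarrow> (\<forall>x\<in>{z0}. ceval v (cns x)))"
        using dz Uprop_ent[OF Ub] unfolding ent_def f1_def by simp
    qed
    have R2: "Rl g (insert (Cond ah bh) {}) d"
      unfolding Rl_sem
    proof (intro conjI)
      show "finite (insert (Cond ah bh) {})" by simp
      show "isC d" using dC .
      show "\<forall>x\<in>insert (Cond ah bh) {}. isC x \<and> (\<forall>v. Rval g v \<longrightarrow> ceval v (ant x) = ceval v (ant d))"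
        using Q1 by simp
      show "Nf g (card (insert (Cond ah bh) {}))" by simp
      show "\<forall>v. Rval g v \<longrightarrow> (idf g \<longrightarrow> ceval v (ant d)) \<longrightarrow>
          (\<forall>x\<in>insert (Cond ah bh) {}. ceval v (cns x)) \<longrightarrow> ceval v (cns d)"
        using Uprop_ent[OF Ub] unfolding f1_def by simp
      show "eqf g \<longrightarrow> (\<forall>v. Rval g v \<longrightarrow> ceval v (cns d) \<longrightarrow> (\<forall>x\<in>insert (Cond ah bh) {}. ceval v (cns x)))"
        using dz zb unfolding ent_def by simp
    qed
    have "{z0} \<subseteq> Z" using z0 Z1sub by auto
    then have ZZ: "\<exists>Z'\<subseteq>Z. Rl g Z' (Cond ah bh)" using R1 by blast
    have "\<exists>h. (h = ph1 Qf pol {} d \<or> h = ph2 Qf pol {} d) \<and> h \<in> Pp p pol \<and> (\<exists>Z'\<subseteq>Z. Rl g Z' h) \<and> Rl g (insert h {}) d"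
      by (rule exI[of _ "Cond ah bh"]) (use ph hP R2 ZZ in simp)
    then have "\<exists>X''\<subseteq>X'. \<exists>h. (h = ph1 Qf pol X'' d \<or> h = ph2 Qf pol X'' d) \<and> h \<in> Pp p pol \<and> (\<exists>Z'\<subseteq>Z. Rl g Z' h) \<and> Rl g (insert h X'') d"
      by (intro exI[of _ "{}"]) simp
    then show ?thesis by (rule disjI2)
  next
    case False
    have noeq: "\<not> eqf g" and Nbig: "\<forall>k\<ge>1. Nf g k" using big_lg[OF False] by auto
    define c where "c = conjs (cns ` X')"
    have evc: "ceval v c = (\<forall>x\<in>X'. ceval v (cns x))" for v unfolding c_def using Xf by simp
    have dc: "cdepth c < n" unfolding c_def using conjs_depth_lt[OF Xf XC] dpos by simp
    define psi where "psi = conjs (cns ` Z1)"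
    have evpsi: "ceval v psi = (\<forall>x\<in>Z1. ceval v (cns x))" for v unfolding psi_def using fZ1 by simp
    have psiP: "p \<notin> cV pol psi" unfolding psi_def using fZ1 ZPP Z1sub by auto
    have NZ1: "Nf g (card Z1)" using Nbig Z1ne fZ1 by (simp add: Suc_leI card_gt_0_iff)
    have NX: "Nf g (card (insert h X'))" for h
    proof -
      have "card (insert h X') \<ge> 1" using Xf by (simp add: Suc_leI card_gt_0_iff)
      then show ?thesis using Nbig by blast
    qed
    obtain f2 where f2: "f2 = (if idf g then CImp (CAnd (ant d) c) (cns d) else CImp c (cns d))" by blast
    define bh where "bh = Qf pol f2"
    have ph: "(if idf g then ph2 Qf pol X' d else ph1 Qf pol X' d) = Cond ah bh"
      unfolding ph1_def ph2_def ah_def bh_def f2 c_def by simp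
    have df2: "cdepth f2 < n" unfolding f2 using dad dc dcd by simp
    have Ub: "Uprop g p pol f2 bh" unfolding bh_def using QP df2 .
    have sem2: "ceval v f2 = ((idf g \<longrightarrow> ceval v (ant d)) \<longrightarrow> (\<forall>x\<in>X'. ceval v (cns x)) \<longrightarrow> ceval v (cns d))" for v
      unfolding f2 using evc by auto
    have pf2: "ent g psi f2"
      unfolding ent_def
    proof (intro allI impI)
      fix v assume Rv: "Rval g v" and pv: "ceval v psi"
      show "ceval v f2" unfolding sem2 using S Rv pv evpsi U by auto
    qed
    have pb: "ent g psi bh" using Uprop_univ[OF Ub psiP pf2] .
    have hP: "Cond ah bh \<in> Pp p pol" unfolding Pp_def using Uprop_pfree[OF Uah] Uprop_pfree[OF Ub] by simp
    have R1: "Rl g Z1 (Cond ah bh)"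
      unfolding Rl_sem
    proof (intro conjI)
      show "finite Z1" using fZ1 .
      show "isC (Cond ah bh)" by simp
      show "\<forall>x\<in>Z1. isC x \<and> (\<forall>v. Rval g v \<longrightarrow> ceval v (ant x) = ceval v (ant (Cond ah bh)))"
        using ZC Z1sub antX Q1 U by auto
      show "Nf g (card Z1)" using NZ1 .
      show "\<forall>v. Rval g v \<longrightarrow> (idf g \<longrightarrow> ceval v (ant (Cond ah bh))) \<longrightarrow>
          (\<forall>x\<in>Z1. ceval v (cns x)) \<longrightarrow> ceval v (cns (Cond ah bh))"
        using pb evpsi unfolding ent_def by simp
      show "eqf g \<longrightarrow> (\<forall>v. Rval g v \<longrightarrow> ceval v (cns (Cond ah bh)) \<longrightarrow> (\<forall>x\<in>Z1. ceval v (cns x)))"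
        using noeq by simp
    qed
    have R2: "Rl g (insert (Cond ah bh) X') d"
      unfolding Rl_sem
    proof (intro conjI)
      show "finite (insert (Cond ah bh) X')" using Xf by simp
      show "isC d" using dC .
      show "\<forall>x\<in>insert (Cond ah bh) X'. isC x \<and> (\<forall>v. Rval g v \<longrightarrow> ceval v (ant x) = ceval v (ant d))"
        using Q1 XC antX by simp
      show "Nf g (card (insert (Cond ah bh) X'))" using NX .
      show "\<forall>v. Rval g v \<longrightarrow> (idf g \<longrightarrow> ceval v (ant d)) \<longrightarrow>
          (\<forall>x\<in>insert (Cond ah bh) X'. ceval v (cns x)) \<longrightarrow> ceval v (cns d)"
        using Uprop_ent[OF Ub] sem2 by simp
      show "eqf g \<longrightarrow> (\<forall>v. Rval g v \<longrightarrow> ceval v (cns d) \<longrightarrow> (\<forall>x\<in>insert (Cond ah bh) X'. ceval v (cns x)))"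
        using noeq by simp
    qed
    have hh: "Cond ah bh = ph1 Qf pol X' d \<or> Cond ah bh = ph2 Qf pol X' d"
      using ph by (cases "idf g") auto
    have "\<exists>Z'\<subseteq>Z. Rl g Z' (Cond ah bh)" using R1 Z1sub by blast
    then have "\<exists>h. (h = ph1 Qf pol X' d \<or> h = ph2 Qf pol X' d) \<and> h \<in> Pp p pol \<and> (\<exists>Z'\<subseteq>Z. Rl g Z' h) \<and> Rl g (insert h X') d"
      using hh hP R2 by blast
    then have "\<exists>X''\<subseteq>X'. \<exists>h. (h = ph1 Qf pol X'' d \<or> h = ph2 Qf pol X'' d) \<and> h \<in> Pp p pol \<and> (\<exists>Z'\<subseteq>Z. Rl g Z' h) \<and> Rl g (insert h X'') d"
      by (intro exI[of _ X']) simp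
    then show ?thesis by (rule disjI2)
  qed
qed




definition Dset :: "nat \<Rightarrow> bool \<Rightarrow> cfm \<Rightarrow> cfm set" where
  "Dset p pol \<phi> = {x. x \<in> occ True \<phi> \<union> occ False \<phi> \<and> \<not> (x \<in> Pp p pol \<and> x \<in> Pm p pol)}"

definition PNs :: "lg \<Rightarrow> (bool \<Rightarrow> cfm \<Rightarrow> cfm) \<Rightarrow> nat \<Rightarrow> bool \<Rightarrow> cfm set \<Rightarrow> cfm set \<Rightarrow> cfm set" where
  "PNs g Qf p pol Dn X = {pn Qf pol X' | X'. X' \<subseteq> Dn \<inter> X \<and> X' \<noteq> {} \<and> pn Qf pol X' \<in> Pm p pol \<and> Rl g X' (pn Qf pol X')}"

definition PHs :: "lg \<Rightarrow> (bool \<Rightarrow> cfm \<Rightarrow> cfm) \<Rightarrow> nat \<Rightarrow> bool \<Rightarrow> cfm set \<Rightarrow> cfm set \<Rightarrow> cfm set \<Rightarrow> cfm set" where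
  "PHs g Qf p pol Dn Dp X = {h | h X' d. X' \<subseteq> Dn \<inter> X \<and> d \<in> Dp - X \<and> (h = ph1 Qf pol X' d \<or> h = ph2 Qf pol X' d) \<and>
      h \<in> Pp p pol \<and> Rl g (insert h X') d}"

definition Kc :: "lg \<Rightarrow> cfm set \<Rightarrow> cfm set \<Rightarrow> cfm set \<Rightarrow> bool" where
  "Kc g Dn Dp X \<longleftrightarrow> (\<exists>X'. X' \<subseteq> Dn \<inter> X \<and> (\<exists>d\<in>Dp - X. Rl g X' d))"

definition Cp :: "lg \<Rightarrow> (bool \<Rightarrow> cfm \<Rightarrow> cfm) \<Rightarrow> nat \<Rightarrow> bool \<Rightarrow> cfm \<Rightarrow> cfm set \<Rightarrow> cfm" where
  "Cp g Qf p pol \<phi> X = (let D = Dset p pol \<phi>; Dn = D \<inter> occ False \<phi>; Dp = D \<inter> occ True \<phi> in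
     CAnd (conjs (Dn \<inter> X \<inter> Pm p pol))
      (CAnd (conjs (neg ` ((Dp - X) \<inter> Pp p pol)))
       (CAnd (conjs (PNs g Qf p pol Dn X))
        (CAnd (conjs (neg ` PHs g Qf p pol Dn Dp X))
         (if Kc g Dn Dp X then CBot else CTop)))))"

definition Afm :: "lg \<Rightarrow> (bool \<Rightarrow> cfm \<Rightarrow> cfm) \<Rightarrow> nat \<Rightarrow> bool \<Rightarrow> cfm \<Rightarrow> cfm" where
  "Afm g Qf p pol \<phi> = conjs ((\<lambda>X. CImp (Cp g Qf p pol \<phi> X) (replc (\<lambda>x. x \<in> Dset p pol \<phi>) (\<lambda>x. x \<in> X) \<phi>)) `
      Pow (Dset p pol \<phi>))"

lemma finite_Dset[simp]: "finite (Dset p pol \<phi>)"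
proof -
  have "Dset p pol \<phi> \<subseteq> occ True \<phi> \<union> occ False \<phi>" unfolding Dset_def by auto
  then show ?thesis by (rule finite_subset) simp
qed

lemma finite_PNs: "finite (Dn \<inter> X) \<Longrightarrow> finite (PNs g Qf p pol Dn X)"
proof -
  assume f: "finite (Dn \<inter> X)"
  have "PNs g Qf p pol Dn X \<subseteq> pn Qf pol ` Pow (Dn \<inter> X)" unfolding PNs_def by auto
  moreover have "finite (pn Qf pol ` Pow (Dn \<inter> X))" by (intro finite_imageI, simp only: finite_Pow_iff, rule f)
  ultimately show ?thesis by (rule finite_subset)
qed

lemma finite_PHs: "finite (Dn \<inter> X) \<Longrightarrow> finite Dp \<Longrightarrow> finite (PHs g Qf p pol Dn Dp X)"
proof -
  assume f: "finite (Dn \<inter> X)" "finite Dp"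
  define F where "F = (\<lambda>(X', d, b). if b then ph1 Qf pol X' d else ph2 Qf pol X' d)"
  have sub: "PHs g Qf p pol Dn Dp X \<subseteq> F ` (Pow (Dn \<inter> X) \<times> Dp \<times> UNIV)"
  proof
    fix h assume "h \<in> PHs g Qf p pol Dn Dp X"
    then obtain X' d where x: "X' \<subseteq> Dn \<inter> X" "d \<in> Dp" "h = ph1 Qf pol X' d \<or> h = ph2 Qf pol X' d"
      unfolding PHs_def by blast
    show "h \<in> F ` (Pow (Dn \<inter> X) \<times> Dp \<times> UNIV)"
    proof (cases "h = ph1 Qf pol X' d")
      case True
      then show ?thesis by (intro image_eqI[of _ _ "(X', d, True)"]) (use x in \<open>simp_all add: F_def\<close>)
    next
      case False
      then show ?thesis by (intro image_eqI[of _ _ "(X', d, False)"]) (use x in \<open>simp_all add: F_def\<close>)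
    qed
  qed
  have "finite (Pow (Dn \<inter> X) \<times> Dp \<times> (UNIV :: bool set))" using f by (simp del: Pow_Int_eq)
  then have "finite (F ` (Pow (Dn \<inter> X) \<times> Dp \<times> UNIV))" by (rule finite_imageI)
  then show ?thesis by (rule finite_subset[OF sub])
qed

lemma Cp_sem:
  assumes "X \<subseteq> Dset p pol \<phi>"
  shows "ceval w (Cp g Qf p pol \<phi> X) \<longleftrightarrow>
    (\<forall>x\<in>Dset p pol \<phi> \<inter> occ False \<phi> \<inter> X \<inter> Pm p pol. w x) \<and>
    (\<forall>x\<in>(Dset p pol \<phi> \<inter> occ True \<phi> - X) \<inter> Pp p pol. \<not> w x) \<and>
    (\<forall>y\<in>PNs g Qf p pol (Dset p pol \<phi> \<inter> occ False \<phi>) X. w y) \<and>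
    (\<forall>h\<in>PHs g Qf p pol (Dset p pol \<phi> \<inter> occ False \<phi>) (Dset p pol \<phi> \<inter> occ True \<phi>) X. \<not> w h) \<and>
    \<not> Kc g (Dset p pol \<phi> \<inter> occ False \<phi>) (Dset p pol \<phi> \<inter> occ True \<phi>) X"
proof -
  let ?D = "Dset p pol \<phi>"
  let ?Dn = "?D \<inter> occ False \<phi>"
  let ?Dp = "?D \<inter> occ True \<phi>"
  have fD: "finite ?D" by simp
  have f1: "finite (?Dn \<inter> X \<inter> Pm p pol)" using fD by auto
  have f2: "finite ((?Dp - X) \<inter> Pp p pol)" using fD by auto
  have f3: "finite (PNs g Qf p pol ?Dn X)" by (rule finite_PNs) (use fD in auto)
  have f4: "finite (PHs g Qf p pol ?Dn ?Dp X)" by (rule finite_PHs) (use fD in auto)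
  have occD: "\<And>x. x \<in> ?D \<Longrightarrow> ceval w x = w x"
    unfolding Dset_def using occ_ceval by blast
  have pnC: "ceval w y = w y" if yy: "y \<in> PNs g Qf p pol ?Dn X" for y
  proof -
    obtain X' where "y = pn Qf pol X'" using yy unfolding PNs_def by blast
    then show ?thesis by (simp add: pn_def)
  qed
  have phC: "ceval w y = w y" if yy: "y \<in> PHs g Qf p pol ?Dn ?Dp X" for y
  proof -
    obtain X' d where "y = ph1 Qf pol X' d \<or> y = ph2 Qf pol X' d" using yy unfolding PHs_def by blast
    then show ?thesis by (auto simp add: ph1_def ph2_def)
  qed
  have e0: "ceval w (Cp g Qf p pol \<phi> X) = (ceval w (conjs (?Dn \<inter> X \<inter> Pm p pol)) \<and>
     ceval w (conjs (neg ` ((?Dp - X) \<inter> Pp p pol))) \<and> ceval w (conjs (PNs g Qf p pol ?Dn X)) \<and>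
     ceval w (conjs (neg ` PHs g Qf p pol ?Dn ?Dp X)) \<and> \<not> Kc g ?Dn ?Dp X)"
    unfolding Cp_def Let_def by simp
  have e1: "ceval w (conjs (?Dn \<inter> X \<inter> Pm p pol)) = (\<forall>x\<in>?Dn \<inter> X \<inter> Pm p pol. w x)"
    using f1 occD by simp
  have e2: "ceval w (conjs (neg ` ((?Dp - X) \<inter> Pp p pol))) = (\<forall>x\<in>(?Dp - X) \<inter> Pp p pol. \<not> w x)"
    using f2 occD by simp
  have e3: "ceval w (conjs (PNs g Qf p pol ?Dn X)) = (\<forall>y\<in>PNs g Qf p pol ?Dn X. w y)"
    using f3 pnC by simp
  have e4: "ceval w (conjs (neg ` PHs g Qf p pol ?Dn ?Dp X)) = (\<forall>h\<in>PHs g Qf p pol ?Dn ?Dp X. \<not> w h)"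
    using f4 phC by simp
  show ?thesis unfolding e0 e1 e2 e3 e4 by blast
qed




lemma vars_pn:
  assumes QP: "\<And>b f. cdepth f < n \<Longrightarrow> Uprop g p b f (Qf b f)"
    and X: "finite X'" "X' \<noteq> {}" "\<forall>x\<in>X'. isC x \<and> cdepth x \<le> n"
  shows "cV e (pn Qf pol X') \<subseteq> (\<Union>x\<in>X'. cV e x)"
proof -
  define x0 where "x0 = (SOME x. x \<in> X')"
  have x0: "x0 \<in> X'" unfolding x0_def using some_mem[OF X(2)] .
  define c where "c = conjs (cns ` X')"
  have da0: "cdepth (ant x0) < n" using X(3) x0 isC_depth by fastforce
  have dc: "cdepth (neg c) < n" using conjs_depth_lt[OF X(1) X(3)] X(2) unfolding c_def by simp
  have v1: "cV (\<not> e) (Qf pol (ant x0)) \<subseteq> cV (\<not> e) (ant x0)" using Uprop_vars[OF QP[OF da0]] .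
  have v2: "cV (\<not> e) (Qf pol (neg c)) \<subseteq> cV (\<not> e) (neg c)" using Uprop_vars[OF QP[OF dc]] .
  have "cV (\<not> e) (ant x0) \<subseteq> cV e x0" using isC_cV[of x0 e] X(3) x0 by auto
  moreover have "cV e c \<subseteq> (\<Union>x\<in>X'. cV e x)"
  proof
    fix q assume "q \<in> cV e c"
    then obtain x where "x \<in> X'" "q \<in> cV e (cns x)" unfolding c_def using X(1) by auto
    then show "q \<in> (\<Union>x\<in>X'. cV e x)" using isC_cV[of x e] X(3) by auto
  qed
  ultimately show ?thesis
    unfolding pn_def using v1 v2 x0 x0_def c_def by auto
qed

lemma vars_ph:
  assumes QP: "\<And>b f. cdepth f < n \<Longrightarrow> Uprop g p b f (Qf b f)"
    and X: "finite X'" "\<forall>x\<in>X'. isC x \<and> cdepth x \<le> n" and d: "isC d" "cdepth d \<le> n"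
    and h: "h = ph1 Qf pol X' d \<or> h = ph2 Qf pol X' d"
  shows "cV e h \<subseteq> cV e d \<union> (\<Union>x\<in>X'. cV (\<not> e) x)"
proof -
  define c where "c = conjs (cns ` X')"
  have npos: "0 < n" using isC_depth[OF d(1)] d(2) by linarith
  have dc: "cdepth c < n" using conjs_depth_lt[OF X(1) X(2)] npos unfolding c_def by simp
  have dad: "cdepth (ant d) < n" and dcd: "cdepth (cns d) < n" using isC_depth[OF d(1)] d(2) by auto
  have va: "cV (\<not> e) (Qf (\<not> pol) (ant d)) \<subseteq> cV (\<not> e) (ant d)" using Uprop_vars[OF QP[OF dad]] .
  have dd: "cV e d = cV (\<not> e) (ant d) \<union> cV e (cns d)" using isC_cV[OF d(1)] .
  have cc: "cV (\<not> e) c \<subseteq> (\<Union>x\<in>X'. cV (\<not> e) x)"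
  proof
    fix q assume "q \<in> cV (\<not> e) c"
    then obtain x where "x \<in> X'" "q \<in> cV (\<not> e) (cns x)" unfolding c_def using X(1) by auto
    then show "q \<in> (\<Union>x\<in>X'. cV (\<not> e) x)" using isC_cV[of x "\<not> e"] X(2) by auto
  qed
  show ?thesis
  proof (cases "h = ph1 Qf pol X' d")
    case True
    have d1: "cdepth (CImp c (cns d)) < n" using dc dcd by simp
    have vb: "cV e (Qf pol (CImp c (cns d))) \<subseteq> cV e (CImp c (cns d))" using Uprop_vars[OF QP[OF d1]] .
    show ?thesis unfolding True ph1_def c_def[symmetric] using va vb dd cc by auto
  next
    case False
    then have hh: "h = ph2 Qf pol X' d" using h by auto
    have d2: "cdepth (CImp (CAnd (ant d) c) (cns d)) < n" using dc dcd dad by simp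
    have vb: "cV e (Qf pol (CImp (CAnd (ant d) c) (cns d))) \<subseteq> cV e (CImp (CAnd (ant d) c) (cns d))"
      using Uprop_vars[OF QP[OF d2]] .
    show ?thesis unfolding hh ph2_def c_def[symmetric] using va vb dd cc by auto
  qed
qed


lemma main_step:
  fixes Qf :: "bool \<Rightarrow> cfm \<Rightarrow> cfm"
  assumes QP: "\<And>b f. cdepth f < cdepth \<phi> \<Longrightarrow> Uprop g p b f (Qf b f)"
  shows "Uprop g p pol \<phi> (Afm g Qf p pol \<phi>)"
proof -
  define n where "n = cdepth \<phi>"
  have QPn: "\<And>b f. cdepth f < n \<Longrightarrow> Uprop g p b f (Qf b f)" using QP unfolding n_def .
  define D where "D = Dset p pol \<phi>"
  define Dn where "Dn = D \<inter> occ False \<phi>"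
  define Dp where "Dp = D \<inter> occ True \<phi>"
  have fD: "finite D" unfolding D_def by simp
  have Docc: "x \<in> occ True \<phi> \<union> occ False \<phi> \<and> \<not> (x \<in> Pp p pol \<and> x \<in> Pm p pol)" if "x \<in> D" for x
    using that unfolding D_def Dset_def by simp
  have notD: "x \<in> Pp p pol \<and> x \<in> Pm p pol" if "x \<in> occ b \<phi>" "x \<notin> D" for x b
  proof -
    have "x \<in> occ True \<phi> \<union> occ False \<phi>" using that(1) by (cases b) auto
    then show ?thesis using that(2) unfolding D_def Dset_def by simp
  qed
  have Ddep: "cdepth x \<le> n" if "x \<in> D" for x
  proof -
    have "x \<in> occ True \<phi> \<or> x \<in> occ False \<phi>" using Docc[OF that] by simp
    then show ?thesis unfolding n_def using occ_depth by blast
  qed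
  define R where "R X = replc (\<lambda>x. x \<in> D) (\<lambda>x. x \<in> X) \<phi>" for X
  define C where "C X = Cp g Qf p pol \<phi> X" for X
  have Aeq: "Afm g Qf p pol \<phi> = conjs ((\<lambda>X. CImp (C X) (R X)) ` Pow D)"
    unfolding Afm_def C_def R_def D_def ..
  have A_sem: "ceval w (Afm g Qf p pol \<phi>) \<longleftrightarrow> (\<forall>X. X \<subseteq> D \<longrightarrow> ceval w (C X) \<longrightarrow> ceval w (R X))" for w
  proof -
    have "finite ((\<lambda>X. CImp (C X) (R X)) ` Pow D)" using fD by simp
    then have "ceval w (Afm g Qf p pol \<phi>) = (\<forall>y\<in>(\<lambda>X. CImp (C X) (R X)) ` Pow D. ceval w y)"
      unfolding Aeq by (rule ceval_conjs)
    also have "\<dots> = (\<forall>X\<in>Pow D. ceval w (CImp (C X) (R X)))" by simp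
    finally show ?thesis by (simp only: ceval.simps Ball_def Pow_iff)
  qed
  have Cs: "ceval w (C X) \<longleftrightarrow> (\<forall>x\<in>Dn \<inter> X \<inter> Pm p pol. w x) \<and> (\<forall>x\<in>(Dp - X) \<inter> Pp p pol. \<not> w x) \<and>
      (\<forall>y\<in>PNs g Qf p pol Dn X. w y) \<and> (\<forall>h\<in>PHs g Qf p pol Dn Dp X. \<not> w h) \<and> \<not> Kc g Dn Dp X"
    if "X \<subseteq> D" for w X
    using Cp_sem[of X p pol \<phi> w g Qf] that unfolding C_def Dn_def Dp_def D_def
    by (simp add: Int_assoc)
  have R_sem: "ceval w (R X) = ceval (\<lambda>x. if x \<in> D then x \<in> X else w x) \<phi>" for w X
    unfolding R_def by (rule ceval_replc)

  have ent3: "ent g (Afm g Qf p pol \<phi>) \<phi>"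
    unfolding ent_def
  proof (intro allI impI)
    fix w assume Rw: "Rval g w" and Aw: "ceval w (Afm g Qf p pol \<phi>)"
    define X where "X = {x \<in> D. w x}"
    have XD: "X \<subseteq> D" unfolding X_def by auto
    have c1: "\<forall>x\<in>Dn \<inter> X \<inter> Pm p pol. w x" unfolding X_def by auto
    have c2: "\<forall>x\<in>(Dp - X) \<inter> Pp p pol. \<not> w x" unfolding X_def Dp_def by auto
    have c3: "\<forall>y\<in>PNs g Qf p pol Dn X. w y"
    proof
      fix y assume "y \<in> PNs g Qf p pol Dn X"
      then obtain X' where X': "X' \<subseteq> Dn \<inter> X" "Rl g X' y" unfolding PNs_def by blast
      have "\<forall>x\<in>X'. w x" using X'(1) unfolding X_def by auto
      then show "w y" using Rw X'(2) unfolding Rval_def by blast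
    qed
    have c4: "\<forall>h\<in>PHs g Qf p pol Dn Dp X. \<not> w h"
    proof (intro ballI notI)
      fix h assume "h \<in> PHs g Qf p pol Dn Dp X" and wh: "w h"
      then obtain X' d where X': "X' \<subseteq> Dn \<inter> X" "d \<in> Dp - X" "Rl g (insert h X') d" unfolding PHs_def by blast
      have "\<forall>x\<in>insert h X'. w x" using X'(1) wh unfolding X_def by auto
      then have "w d" using Rw X'(3) unfolding Rval_def by blast
      then show False using X'(2) unfolding X_def Dp_def by auto
    qed
    have c5: "\<not> Kc g Dn Dp X"
    proof
      assume "Kc g Dn Dp X"
      then obtain X' d where X': "X' \<subseteq> Dn \<inter> X" "d \<in> Dp - X" "Rl g X' d" unfolding Kc_def by blast
      have "\<forall>x\<in>X'. w x" using X'(1) unfolding X_def by auto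
      then have "w d" using Rw X'(3) unfolding Rval_def by blast
      then show False using X'(2) unfolding X_def Dp_def by auto
    qed
    have "ceval w (C X)" using Cs[OF XD] c1 c2 c3 c4 c5 by blast
    then have "ceval w (R X)" using A_sem Aw XD by blast
    moreover have "(\<lambda>x. if x \<in> D then x \<in> X else w x) = w" unfolding X_def by auto
    ultimately show "ceval w \<phi>" using R_sem by metis
  qed

  have univ: "ent g \<psi> (Afm g Qf p pol \<phi>)" if \<psi>p: "p \<notin> cV pol \<psi>" and \<psi>e: "ent g \<psi> \<phi>" for \<psi>
    unfolding ent_def
  proof (intro allI impI)
    fix w assume Rw: "Rval g w" and wpsi: "ceval w \<psi>"
    show "ceval w (Afm g Qf p pol \<phi>)"
      unfolding A_sem
    proof (intro allI impI)
      fix X assume XD: "X \<subseteq> D" and Cw: "ceval w (C X)"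
      have C1: "\<forall>x\<in>Dn \<inter> X \<inter> Pm p pol. w x" and C2: "\<forall>x\<in>(Dp - X) \<inter> Pp p pol. \<not> w x"
        and C3: "\<forall>y\<in>PNs g Qf p pol Dn X. w y" and C4: "\<forall>h\<in>PHs g Qf p pol Dn Dp X. \<not> w h"
        and C5: "\<not> Kc g Dn Dp X" using Cw unfolding Cs[OF XD, of w] by auto
      define B where "B = (Dn \<inter> X) \<union> {y. y \<in> Pp p pol \<and> w y}"
      define u where "u x = (if isC x then \<exists>ds. ds \<subseteq> B \<and> Rl g ds x else x \<in> B)" for x
      have Ru: "Rval g u"
        unfolding Rval_def
      proof (intro allI impI)
        fix es t assume Rt: "Rl g es t" and T: "\<forall>x\<in>es. u x"
        have esC: "\<forall>x\<in>es. isC x" using RlD(3)[OF Rt] by blast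
        have "\<forall>e\<in>es. \<exists>ds. ds \<subseteq> B \<and> Rl g ds e" using T esC unfolding u_def by auto
        then have "\<exists>h. \<forall>e\<in>es. h e \<subseteq> B \<and> Rl g (h e) e" by (rule bchoice)
        then obtain h where h: "\<forall>e\<in>es. h e \<subseteq> B \<and> Rl g (h e) e" by blast
        have "Rl g (\<Union>e\<in>es. h e) t" using Rl_trans[OF Rt] h by blast
        moreover have "(\<Union>e\<in>es. h e) \<subseteq> B" using h by auto
        moreover have "isC t" using RlD(2)[OF Rt] .
        ultimately show "u t" unfolding u_def by auto
      qed
      have uB: "u x" if "x \<in> B" for x
      proof (cases "isC x")
        case True
        then show ?thesis unfolding u_def using Rl_refl[OF True] that by auto
      next
        case False
        then show ?thesis unfolding u_def using that by auto
      qed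
      have split: "\<exists>Z X'. ds = Z \<union> X' \<and> finite Z \<and> Z \<subseteq> Pp p pol \<and> (\<forall>z\<in>Z. w z) \<and> finite X' \<and> X' \<subseteq> Dn \<inter> X"
        if "ds \<subseteq> B" "finite ds" for ds
      proof -
        define Z where "Z = ds \<inter> {y. y \<in> Pp p pol \<and> w y}"
        define X' where "X' = ds - Z"
        have "ds = Z \<union> X'" "finite Z" "Z \<subseteq> Pp p pol" "\<forall>z\<in>Z. w z" "finite X'" "X' \<subseteq> Dn \<inter> X"
          using that unfolding Z_def X'_def B_def by auto
        then show ?thesis by blast
      qed
      have ii: "w x" if xP: "x \<in> Pm p pol" and ux: "u x" for x
      proof (cases "isC x")
        case False
        then have "x \<in> B" using ux unfolding u_def by auto
        then show ?thesis using C1 xP unfolding B_def by auto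
      next
        case True
        then obtain ds where ds: "ds \<subseteq> B" "Rl g ds x" using ux unfolding u_def by auto
        obtain Z X' where ZX: "ds = Z \<union> X'" "finite Z" "Z \<subseteq> Pp p pol" "\<forall>z\<in>Z. w z" "finite X'" "X' \<subseteq> Dn \<inter> X"
          using split[OF ds(1) RlD(1)[OF ds(2)]] by blast
        have Xd: "\<forall>x\<in>X'. cdepth x \<le> n" using ZX(6) Ddep unfolding Dn_def by auto
        have R: "Rl g (Z \<union> X') x" using ds(2) ZX(1) by simp
        from OSIa[OF QPn ZX(2) ZX(3) ZX(5) Xd xP R]
        show ?thesis
        proof
          assume "Rl g Z x"
          then show ?thesis using Rw ZX(4) unfolding Rval_def by blast
        next
          assume "\<exists>X''\<subseteq>X'. X'' \<noteq> {} \<and> pn Qf pol X'' \<in> Pm p pol \<and> Rl g X'' (pn Qf pol X'') \<and>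
            (\<exists>Z'\<subseteq>Z. Rl g (insert (pn Qf pol X'') Z') x)"
          then obtain X'' Z' where H: "X'' \<subseteq> X'" "X'' \<noteq> {}" "pn Qf pol X'' \<in> Pm p pol" "Rl g X'' (pn Qf pol X'')"
            "Z' \<subseteq> Z" "Rl g (insert (pn Qf pol X'') Z') x" by blast
          have "pn Qf pol X'' \<in> PNs g Qf p pol Dn X" unfolding PNs_def using H ZX(6) by blast
          then have "w (pn Qf pol X'')" using C3 by blast
          then have "\<forall>y\<in>insert (pn Qf pol X'') Z'. w y" using H(5) ZX(4) by auto
          then show ?thesis using Rw H(6) unfolding Rval_def by blast
        qed
      qed
      have i: "\<not> u x" if xD: "x \<in> Dp - X" for x
      proof
        assume ux: "u x"
        show False
        proof (cases "isC x")
          case False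
          then have "x \<in> B" using ux unfolding u_def by auto
          then have "x \<in> Pp p pol" "w x" using xD unfolding B_def by auto
          then show False using C2 xD by auto
        next
          case True
          then obtain ds where ds: "ds \<subseteq> B" "Rl g ds x" using ux unfolding u_def by auto
          obtain Z X' where ZX: "ds = Z \<union> X'" "finite Z" "Z \<subseteq> Pp p pol" "\<forall>z\<in>Z. w z" "finite X'" "X' \<subseteq> Dn \<inter> X"
            using split[OF ds(1) RlD(1)[OF ds(2)]] by blast
          have Xd: "\<forall>x\<in>X'. cdepth x \<le> n" using ZX(6) Ddep unfolding Dn_def by auto
          have dd: "cdepth x \<le> n" using xD Ddep unfolding Dp_def by auto
          have R: "Rl g (Z \<union> X') x" using ds(2) ZX(1) by simp
          from OSIb[OF QPn ZX(2) ZX(3) ZX(5) Xd dd R]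
          show False
          proof
            assume "\<exists>X''\<subseteq>X'. Rl g X'' x"
            then have "Kc g Dn Dp X" unfolding Kc_def using ZX(6) xD by blast
            then show False using C5 by blast
          next
            assume "\<exists>X''\<subseteq>X'. \<exists>h. (h = ph1 Qf pol X'' x \<or> h = ph2 Qf pol X'' x) \<and>
              h \<in> Pp p pol \<and> (\<exists>Z'\<subseteq>Z. Rl g Z' h) \<and> Rl g (insert h X'') x"
            then obtain X'' h Z' where H: "X'' \<subseteq> X'" "h = ph1 Qf pol X'' x \<or> h = ph2 Qf pol X'' x"
              "h \<in> Pp p pol" "Z' \<subseteq> Z" "Rl g Z' h" "Rl g (insert h X'') x" by blast
            have "\<forall>y\<in>Z'. w y" using H(4) ZX(4) by auto
            then have "w h" using Rw H(5) unfolding Rval_def by blast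
            moreover have "h \<in> PHs g Qf p pol Dn Dp X" unfolding PHs_def using H ZX(6) xD by blast
            ultimately show False using C4 by blast
          qed
        qed
      qed
      have upsi: "ceval u \<psi>"
      proof (rule occ_mono[OF _ _ wpsi])
        show "\<forall>x\<in>occ True \<psi>. w x \<longrightarrow> u x"
        proof (intro ballI impI)
          fix x assume x: "x \<in> occ True \<psi>" and wx: "w x"
          have "cV pol x \<subseteq> cV pol \<psi>" using occ_cV[OF x, of pol] by simp
          then have "x \<in> Pp p pol" using \<psi>p unfolding Pp_def by auto
          then show "u x" using uB wx unfolding B_def by auto
        qed
        show "\<forall>x\<in>occ False \<psi>. u x \<longrightarrow> w x"
        proof (intro ballI impI)
          fix x assume x: "x \<in> occ False \<psi>" and ux: "u x"
          have "cV (\<not> pol) x \<subseteq> cV pol \<psi>" using occ_cV[OF x, of "\<not> pol"] by simp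
          then have "x \<in> Pm p pol" using \<psi>p unfolding Pm_def by auto
          then show "w x" using ii ux by blast
        qed
      qed
      have uphi: "ceval u \<phi>" using \<psi>e Ru upsi unfolding ent_def by blast
      have "ceval (\<lambda>x. if x \<in> D then x \<in> X else w x) \<phi>"
      proof (rule occ_mono[OF _ _ uphi])
        show "\<forall>x\<in>occ True \<phi>. u x \<longrightarrow> (if x \<in> D then x \<in> X else w x)"
        proof (intro ballI impI)
          fix x assume x: "x \<in> occ True \<phi>" and ux: "u x"
          show "if x \<in> D then x \<in> X else w x"
          proof (cases "x \<in> D")
            case True
            then have "x \<in> Dp" unfolding Dp_def using x by auto
            then have "x \<in> X" using i ux by blast
            then show ?thesis using True by simp
          next
            case False
            then have "x \<in> Pm p pol" using notD[OF x] by blast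
            then show ?thesis using False ii ux by simp
          qed
        qed
        show "\<forall>x\<in>occ False \<phi>. (if x \<in> D then x \<in> X else w x) \<longrightarrow> u x"
        proof (intro ballI impI)
          fix x assume x: "x \<in> occ False \<phi>" and vx: "if x \<in> D then x \<in> X else w x"
          show "u x"
          proof (cases "x \<in> D")
            case True
            then have "x \<in> Dn \<inter> X" unfolding Dn_def using x vx by auto
            then show ?thesis using uB unfolding B_def by auto
          next
            case False
            then have "x \<in> Pp p pol" "w x" using notD[OF x] vx by auto
            then show ?thesis using uB unfolding B_def by auto
          qed
        qed
      qed
      then show "ceval w (R X)" using R_sem by simp
    qed
  qed
  have Ceq: "C X = CAnd (conjs (Dn \<inter> X \<inter> Pm p pol)) (CAnd (conjs (neg ` ((Dp - X) \<inter> Pp p pol)))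
      (CAnd (conjs (PNs g Qf p pol Dn X)) (CAnd (conjs (neg ` PHs g Qf p pol Dn Dp X)) (if Kc g Dn Dp X then CBot else CTop))))" for X
    unfolding C_def Cp_def Let_def Dn_def Dp_def D_def ..
  have varsC: "q \<in> cV (\<not> e) \<phi> \<and> (e = (\<not> pol) \<longrightarrow> q \<noteq> p)" if XD: "X \<subseteq> D" and qC: "q \<in> cV e (C X)" for X q e
  proof -
    have f1: "finite (Dn \<inter> X \<inter> Pm p pol)" using fD unfolding Dn_def by auto
    have f2: "finite ((Dp - X) \<inter> Pp p pol)" using fD unfolding Dp_def by auto
    have f3: "finite (PNs g Qf p pol Dn X)" by (rule finite_PNs) (use fD in \<open>auto simp: Dn_def\<close>)
    have f4: "finite (PHs g Qf p pol Dn Dp X)" by (rule finite_PHs) (use fD in \<open>auto simp: Dn_def Dp_def\<close>)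
    have cif: "cV e (if Kc g Dn Dp X then CBot else CTop) = {}" by simp
    have "q \<in> (\<Union>x\<in>Dn \<inter> X \<inter> Pm p pol. cV e x) \<or> q \<in> (\<Union>x\<in>(Dp - X) \<inter> Pp p pol. cV (\<not> e) x) \<or>
          q \<in> (\<Union>y\<in>PNs g Qf p pol Dn X. cV e y) \<or> q \<in> (\<Union>h\<in>PHs g Qf p pol Dn Dp X. cV (\<not> e) h)"
      using qC unfolding Ceq using f1 f2 f3 f4 cif by simp
    then show ?thesis
    proof (elim disjE)
      assume "q \<in> (\<Union>x\<in>Dn \<inter> X \<inter> Pm p pol. cV e x)"
      then obtain x where x: "x \<in> Dn" "x \<in> Pm p pol" "q \<in> cV e x" by blast
      have "cV e x \<subseteq> cV (False = e) \<phi>" using occ_cV x(1) unfolding Dn_def by blast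
      moreover have "(False = e) = (\<not> e)" by simp
      ultimately show ?thesis using x unfolding Pm_def by auto
    next
      assume "q \<in> (\<Union>x\<in>(Dp - X) \<inter> Pp p pol. cV (\<not> e) x)"
      then obtain x where x: "x \<in> Dp" "x \<in> Pp p pol" "q \<in> cV (\<not> e) x" by blast
      have "cV (\<not> e) x \<subseteq> cV (True = (\<not> e)) \<phi>" using occ_cV x(1) unfolding Dp_def by blast
      then show ?thesis using x unfolding Pp_def by auto
    next
      assume "q \<in> (\<Union>y\<in>PNs g Qf p pol Dn X. cV e y)"
      then obtain y where y: "y \<in> PNs g Qf p pol Dn X" "q \<in> cV e y" by blast
      then obtain X' where X': "y = pn Qf pol X'" "X' \<subseteq> Dn \<inter> X" "X' \<noteq> {}" "y \<in> Pm p pol" "Rl g X' y"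
        unfolding PNs_def by blast
      have XC: "finite X'" "\<forall>x\<in>X'. isC x \<and> cdepth x \<le> n"
        using RlD(1,3)[OF X'(5)] X'(2) Ddep unfolding Dn_def by auto
      have "q \<in> (\<Union>x\<in>X'. cV e x)" using vars_pn[OF QPn XC(1) X'(3) XC(2)] y(2) X'(1) by blast
      then obtain x where x: "x \<in> X'" "q \<in> cV e x" by blast
      have "cV e x \<subseteq> cV (False = e) \<phi>" using occ_cV x(1) X'(2) unfolding Dn_def by blast
      then have "q \<in> cV (\<not> e) \<phi>" using x by auto
      moreover have "e = (\<not> pol) \<longrightarrow> q \<noteq> p" using X'(4) y(2) unfolding Pm_def by auto
      ultimately show ?thesis by blast
    next
      assume "q \<in> (\<Union>h\<in>PHs g Qf p pol Dn Dp X. cV (\<not> e) h)"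
      then obtain h where h: "h \<in> PHs g Qf p pol Dn Dp X" "q \<in> cV (\<not> e) h" by blast
      then obtain X' d where X': "X' \<subseteq> Dn \<inter> X" "d \<in> Dp - X" "h = ph1 Qf pol X' d \<or> h = ph2 Qf pol X' d"
        "h \<in> Pp p pol" "Rl g (insert h X') d" unfolding PHs_def by blast
      have XC: "finite X'" "\<forall>x\<in>X'. isC x \<and> cdepth x \<le> n"
        using RlD(1,3)[OF X'(5)] X'(1) Ddep unfolding Dn_def by auto
      have dC: "isC d" "cdepth d \<le> n" using RlD(2)[OF X'(5)] X'(2) Ddep unfolding Dp_def by auto
      have "q \<in> cV (\<not> e) d \<union> (\<Union>x\<in>X'. cV (\<not> \<not> e) x)"
        using vars_ph[OF QPn XC(1) XC(2) dC(1) dC(2) X'(3)] h(2) by blast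
      then have "q \<in> cV (\<not> e) \<phi>"
      proof
        assume "q \<in> cV (\<not> e) d"
        moreover have "cV (\<not> e) d \<subseteq> cV (True = (\<not> e)) \<phi>" using occ_cV X'(2) unfolding Dp_def by blast
        ultimately show ?thesis by auto
      next
        assume "q \<in> (\<Union>x\<in>X'. cV (\<not> \<not> e) x)"
        then obtain x where x: "x \<in> X'" "q \<in> cV e x" by auto
        have "cV e x \<subseteq> cV (False = e) \<phi>" using occ_cV x(1) X'(1) unfolding Dn_def by blast
        then show ?thesis using x by auto
      qed
      moreover have "e = (\<not> pol) \<longrightarrow> q \<noteq> p" using X'(4) h(2) unfolding Pp_def by auto
      ultimately show ?thesis by blast
    qed
  qed
  have varsR: "q \<in> cV d \<phi> \<and> (d = pol \<longrightarrow> q \<noteq> p)" if qR: "q \<in> cV d (R X)" for q d X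
  proof -
    obtain b x where bx: "x \<in> occ b \<phi>" "x \<notin> D" "q \<in> cV (b = d) x"
      using cV_replc[OF qR[unfolded R_def]] by blast
    have "cV (b = d) x \<subseteq> cV (b = (b = d)) \<phi>" using occ_cV[OF bx(1)] .
    moreover have "(b = (b = d)) = d" by auto
    ultimately have "q \<in> cV d \<phi>" using bx(3) by auto
    moreover have "d = pol \<longrightarrow> q \<noteq> p"
      using notD[OF bx(1) bx(2)] bx(3) unfolding Pp_def Pm_def by (cases b) auto
    ultimately show ?thesis by blast
  qed
  have cVA: "cV d (Afm g Qf p pol \<phi>) = (\<Union>X\<in>Pow D. cV (\<not> d) (C X) \<union> cV d (R X))" for d
    unfolding Aeq using fD by simp
  have v1: "p \<notin> cV pol (Afm g Qf p pol \<phi>)"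
    unfolding cVA using varsC varsR by blast
  have v2: "cV d (Afm g Qf p pol \<phi>) \<subseteq> cV d \<phi>" for d
    unfolding cVA using varsC[of _ _ "\<not> d"] varsR by auto
  show ?thesis unfolding Uprop_def using v1 v2 ent3 univ by blast
qed




lemma U_exists: "\<forall>\<phi>. cdepth \<phi> < m \<longrightarrow> (\<forall>pol. \<exists>A. Uprop g p pol \<phi> A)"
proof (induction m)
  case 0
  then show ?case by simp
next
  case (Suc m)
  show ?case
  proof (intro allI impI)
    fix \<phi> :: cfm and pol assume d: "cdepth \<phi> < Suc m"
    define Qf where "Qf b f = (SOME A. Uprop g p b f A)" for b f
    have QP: "Uprop g p b f (Qf b f)" if "cdepth f < cdepth \<phi>" for b f
    proof -
      have "cdepth f < m" using that d by simp
      then have "\<exists>A. Uprop g p b f A" using Suc.IH by blast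
      then show ?thesis unfolding Qf_def by (rule someI_ex)
    qed
    show "\<exists>A. Uprop g p pol \<phi> A" using main_step[of \<phi> g p Qf pol] QP by blast
  qed
qed

lemma U_ex: "\<exists>A. Uprop g p pol \<phi> A"
  using U_exists[of "Suc (cdepth \<phi>)" g p] by blast

theorem ULIP_LL: "ULIP cV CImp (LL g)"
  unfolding ULIP_def
proof (intro allI conjI)
  fix \<phi> p pol
  obtain A where A: "Uprop g p pol \<phi> A" using U_ex by blast
  show "\<exists>A. p \<notin> cV pol A \<and> (\<forall>d. cV d A \<subseteq> cV d \<phi>) \<and> CImp A \<phi> \<in> LL g \<and>
          (\<forall>\<psi>. p \<notin> cV pol \<psi> \<longrightarrow> CImp \<psi> \<phi> \<in> LL g \<longrightarrow> CImp \<psi> A \<in> LL g)"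
    using A unfolding Uprop_def LL_imp_ent by blast
  obtain A' where A': "Uprop g p (\<not> pol) (neg \<phi>) A'" using U_ex by blast
  have e1: "p \<notin> cV pol (neg A')" using Uprop_pfree[OF A'] by simp
  have e2: "\<forall>d. cV d (neg A') \<subseteq> cV d \<phi>"
  proof
    fix d
    have "cV (\<not> d) A' \<subseteq> cV (\<not> d) (neg \<phi>)" by (rule Uprop_vars[OF A'])
    then show "cV d (neg A') \<subseteq> cV d \<phi>" by simp
  qed
  have e3: "ent g \<phi> (neg A')" unfolding ent_def using Uprop_ent[OF A'] by auto
  have e4: "\<forall>\<psi>. p \<notin> cV pol \<psi> \<longrightarrow> ent g \<phi> \<psi> \<longrightarrow> ent g (neg A') \<psi>"
    using Eprop_univ[OF A'] by simp
  show "\<exists>E. p \<notin> cV pol E \<and> (\<forall>d. cV d E \<subseteq> cV d \<phi>) \<and> CImp \<phi> E \<in> LL g \<and>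
          (\<forall>\<psi>. p \<notin> cV pol \<psi> \<longrightarrow> CImp \<phi> \<psi> \<in> LL g \<longrightarrow> CImp E \<psi> \<in> LL g)"
    using e1 e2 e3 e4 unfolding LL_imp_ent by blast
qed

lemma ULIP_UIP:
  assumes U: "ULIP V imp L"
    and tr: "\<And>a b c. imp a b \<in> L \<Longrightarrow> imp b c \<in> L \<Longrightarrow> imp a c \<in> L"
  shows "UIP (\<lambda>f. V True f \<union> V False f) imp L"
  unfolding UIP_def
proof (intro allI conjI)
  fix \<phi> p
  obtain A1 where A1: "p \<notin> V False A1" "\<forall>d. V d A1 \<subseteq> V d \<phi>" "imp A1 \<phi> \<in> L"
    "\<forall>\<psi>. p \<notin> V False \<psi> \<longrightarrow> imp \<psi> \<phi> \<in> L \<longrightarrow> imp \<psi> A1 \<in> L"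
    using U unfolding ULIP_def by blast
  obtain A2 where A2: "p \<notin> V True A2" "\<forall>d. V d A2 \<subseteq> V d A1" "imp A2 A1 \<in> L"
    "\<forall>\<psi>. p \<notin> V True \<psi> \<longrightarrow> imp \<psi> A1 \<in> L \<longrightarrow> imp \<psi> A2 \<in> L"
    using U unfolding ULIP_def by blast
  show "\<exists>A. p \<notin> V True A \<union> V False A \<and> V True A \<union> V False A \<subseteq> V True \<phi> \<union> V False \<phi> \<and>
      imp A \<phi> \<in> L \<and> (\<forall>\<psi>. p \<notin> V True \<psi> \<union> V False \<psi> \<longrightarrow> imp \<psi> \<phi> \<in> L \<longrightarrow> imp \<psi> A \<in> L)"
  proof (intro exI conjI allI impI)
    show "p \<notin> V True A2 \<union> V False A2" using A1(1) A2(1,2) by blast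
    show "V True A2 \<union> V False A2 \<subseteq> V True \<phi> \<union> V False \<phi>" using A1(2) A2(2) by blast
    show "imp A2 \<phi> \<in> L" using tr A2(3) A1(3) by blast
    fix \<psi> assume "p \<notin> V True \<psi> \<union> V False \<psi>" "imp \<psi> \<phi> \<in> L"
    then show "imp \<psi> A2 \<in> L" using A1(4) A2(4) by blast
  qed
  obtain E1 where E1: "p \<notin> V False E1" "\<forall>d. V d E1 \<subseteq> V d \<phi>" "imp \<phi> E1 \<in> L"
    "\<forall>\<psi>. p \<notin> V False \<psi> \<longrightarrow> imp \<phi> \<psi> \<in> L \<longrightarrow> imp E1 \<psi> \<in> L"
    using U unfolding ULIP_def by blast
  obtain E2 where E2: "p \<notin> V True E2" "\<forall>d. V d E2 \<subseteq> V d E1" "imp E1 E2 \<in> L"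
    "\<forall>\<psi>. p \<notin> V True \<psi> \<longrightarrow> imp E1 \<psi> \<in> L \<longrightarrow> imp E2 \<psi> \<in> L"
    using U unfolding ULIP_def by blast
  show "\<exists>E. p \<notin> V True E \<union> V False E \<and> V True E \<union> V False E \<subseteq> V True \<phi> \<union> V False \<phi> \<and>
      imp \<phi> E \<in> L \<and> (\<forall>\<psi>. p \<notin> V True \<psi> \<union> V False \<psi> \<longrightarrow> imp \<phi> \<psi> \<in> L \<longrightarrow> imp E \<psi> \<in> L)"
  proof (intro exI conjI allI impI)
    show "p \<notin> V True E2 \<union> V False E2" using E1(1) E2(1,2) by blast
    show "V True E2 \<union> V False E2 \<subseteq> V True \<phi> \<union> V False \<phi>" using E1(2) E2(2) by blast
    show "imp \<phi> E2 \<in> L" using tr E1(3) E2(3) by blast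
    fix \<psi> assume "p \<notin> V True \<psi> \<union> V False \<psi>" "imp \<phi> \<psi> \<in> L"
    then show "imp E2 \<psi> \<in> L" using E1(4) E2(4) by blast
  qed
qed

lemma ULIP_LIP:
  assumes U: "ULIP V imp L"
    and tr: "\<And>a b c. imp a b \<in> L \<Longrightarrow> imp b c \<in> L \<Longrightarrow> imp a c \<in> L"
    and rf: "\<And>a. imp a a \<in> L"
    and fin: "\<And>d f. finite (V d f)"
  shows "LIP V imp L"
  unfolding LIP_def
proof (intro allI impI)
  fix \<phi> \<psi> assume H: "imp \<phi> \<psi> \<in> L"
  have gen: "\<exists>\<theta>. (\<forall>d. V d \<theta> \<subseteq> V d \<phi>) \<and> (\<forall>pd\<in>S. fst pd \<notin> V (snd pd) \<theta>) \<and> imp \<phi> \<theta> \<in> L \<and> imp \<theta> \<psi> \<in> L"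
    if "finite S" "\<forall>pd\<in>S. fst pd \<notin> V (snd pd) \<psi>" for S
    using that
  proof (induction S rule: finite_induct)
    case empty
    show ?case using rf H by blast
  next
    case (insert pd S)
    obtain \<theta>1 where T1: "\<forall>d. V d \<theta>1 \<subseteq> V d \<phi>" "\<forall>pd\<in>S. fst pd \<notin> V (snd pd) \<theta>1" "imp \<phi> \<theta>1 \<in> L" "imp \<theta>1 \<psi> \<in> L"
      using insert.IH insert.prems by blast
    obtain E where E: "fst pd \<notin> V (snd pd) E" "\<forall>d. V d E \<subseteq> V d \<theta>1" "imp \<theta>1 E \<in> L"
      "\<forall>\<chi>. fst pd \<notin> V (snd pd) \<chi> \<longrightarrow> imp \<theta>1 \<chi> \<in> L \<longrightarrow> imp E \<chi> \<in> L"
      using U unfolding ULIP_def by blast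
    have "imp E \<psi> \<in> L" using E(4) T1(4) insert.prems by blast
    moreover have "imp \<phi> E \<in> L" using tr T1(3) E(3) by blast
    moreover have "\<forall>d. V d E \<subseteq> V d \<phi>" using E(2) T1(1) by blast
    moreover have "\<forall>pd'\<in>insert pd S. fst pd' \<notin> V (snd pd') E" using E(1,2) T1(2) by blast
    ultimately show ?case by blast
  qed
  define S where "S = {pd. fst pd \<in> V (snd pd) \<phi> \<and> fst pd \<notin> V (snd pd) \<psi>}"
  have sub: "S \<subseteq> (V True \<phi> \<union> V False \<phi>) \<times> UNIV"
  proof
    fix pd assume "pd \<in> S"
    then have "fst pd \<in> V (snd pd) \<phi>" unfolding S_def by simp
    then show "pd \<in> (V True \<phi> \<union> V False \<phi>) \<times> UNIV" by (cases pd; cases "snd pd") auto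
  qed
  have fS: "finite S" by (rule finite_subset[OF sub]) (simp add: fin)
  obtain \<theta> where T: "\<forall>d. V d \<theta> \<subseteq> V d \<phi>" "\<forall>pd\<in>S. fst pd \<notin> V (snd pd) \<theta>" "imp \<phi> \<theta> \<in> L" "imp \<theta> \<psi> \<in> L"
    using gen[OF fS] unfolding S_def by auto
  have "\<forall>d. V d \<theta> \<subseteq> V d \<phi> \<inter> V d \<psi>"
  proof (intro allI subsetI)
    fix d q assume q: "q \<in> V d \<theta>"
    then have "q \<in> V d \<phi>" using T(1) by blast
    moreover have "q \<in> V d \<psi>"
    proof (rule ccontr)
      assume "q \<notin> V d \<psi>"
      then have "(q, d) \<in> S" unfolding S_def using \<open>q \<in> V d \<phi>\<close> by simp
      then show False using T(2) q by fastforce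
    qed
    ultimately show "q \<in> V d \<phi> \<inter> V d \<psi>" by blast
  qed
  then show "\<exists>\<theta>. (\<forall>d. V d \<theta> \<subseteq> V d \<phi> \<inter> V d \<psi>) \<and> imp \<phi> \<theta> \<in> L \<and> imp \<theta> \<psi> \<in> L"
    using T by blast
qed

lemma ULIP_all:
  assumes "ULIP V imp L"
    and "\<And>a b c. imp a b \<in> L \<Longrightarrow> imp b c \<in> L \<Longrightarrow> imp a c \<in> L"
    and "\<And>a. imp a a \<in> L"
    and "\<And>d f. finite (V d f)"
  shows "all_interp_props V imp L"
  unfolding all_interp_props_def using assms ULIP_UIP ULIP_LIP by blast

lemma LL_trans: "CImp a b \<in> LL g \<Longrightarrow> CImp b c \<in> LL g \<Longrightarrow> CImp a c \<in> LL g"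
  by (rule LL_sem2[of "CImp a b" g "CImp b c"]) auto

lemma LL_refl: "CImp a a \<in> LL g"
  by (rule LL_sem0) auto

theorem cond_all: "all_interp_props cV CImp (LL g)"
  by (rule ULIP_all[OF ULIP_LL LL_trans LL_refl finite_cV])


section \<open>Modal logics via translation\<close>

fun tr :: "mfm \<Rightarrow> cfm" where
  "tr (MAtom p) = CAtom p"
| "tr MBot = CBot"
| "tr (MAnd a b) = CAnd (tr a) (tr b)"
| "tr (MOr a b) = COr (tr a) (tr b)"
| "tr (MImp a b) = CImp (tr a) (tr b)"
| "tr (MBox a) = Cond CBot (tr a)"

fun untr :: "cfm \<Rightarrow> mfm" where
  "untr (CAtom p) = MAtom p"
| "untr CBot = MBot"
| "untr (CAnd a b) = MAnd (untr a) (untr b)"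
| "untr (COr a b) = MOr (untr a) (untr b)"
| "untr (CImp a b) = MImp (untr a) (untr b)"
| "untr (Cond a b) = MBox (untr b)"

lemma untr_tr[simp]: "untr (tr f) = f"
  by (induction f) auto

lemma cV_tr[simp]: "cV d (tr f) = mV d f"
  by (induction f arbitrary: d) auto

lemma mV_untr: "mV d (untr f) \<subseteq> cV d f"
  by (induction f arbitrary: d) auto

lemma ceval_tr: "ceval v (tr f) = meval (\<lambda>m. v (tr m)) f"
  by (induction f) auto

lemma meval_untr: "meval v (untr f) = ceval (\<lambda>c. v (untr c)) f"
  by (induction f) auto

lemma tr_CTop[simp]: "tr MTop = CTop" by (simp add: MTop_def CTop_def)
lemma untr_CTop[simp]: "untr CTop = MTop" by (simp add: MTop_def CTop_def)
lemma tr_MIff[simp]: "tr (MIff a b) = CIff (tr a) (tr b)" by (simp add: MIff_def CIff_def)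
lemma untr_CIff[simp]: "untr (CIff a b) = MIff (untr a) (untr b)" by (simp add: MIff_def CIff_def)

lemma meval_MIff[simp]: "meval v (MIff a b) = (meval v a = meval v b)" by (auto simp: MIff_def)

lemma M_sem:
  assumes "finite F" "F \<subseteq> mlogic Ax" "\<And>v. (\<forall>f\<in>F. meval v f) \<Longrightarrow> meval v g"
  shows "g \<in> mlogic Ax"
  using assms
proof (induction F arbitrary: g rule: finite_induct)
  case empty
  then show ?case by (auto intro: mlogic.taut simp: mtaut_def)
next
  case (insert f F)
  have "MImp f g \<in> mlogic Ax"
    by (rule insert.IH) (use insert.prems in auto)
  moreover have "f \<in> mlogic Ax" using insert.prems by auto
  ultimately show ?case by (rule mlogic.mp[rotated])
qed

lemma M_sem1: "a \<in> mlogic Ax \<Longrightarrow> (\<And>v. meval v a \<Longrightarrow> meval v g) \<Longrightarrow> g \<in> mlogic Ax"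
  using M_sem[of "{a}"] by auto
lemma M_sem2: "a \<in> mlogic Ax \<Longrightarrow> b \<in> mlogic Ax \<Longrightarrow> (\<And>v. meval v a \<Longrightarrow> meval v b \<Longrightarrow> meval v g) \<Longrightarrow> g \<in> mlogic Ax"
  using M_sem[of "{a, b}"] by auto

lemma tr_sound:
  assumes "f \<in> mlogic Axm" and AX: "\<And>a. a \<in> Axm \<Longrightarrow> tr a \<in> clogic Axc"
  shows "tr f \<in> clogic Axc"
  using assms(1)
proof (induction rule: mlogic.induct)
  case (taut f)
  then show ?case using ceval_tr by (auto intro!: L_sem0 simp: mtaut_def)
next
  case (ax f)
  then show ?case using AX by blast
next
  case (mp f g)
  then show ?case by (auto intro: clogic.mp)
next
  case (re f g)
  have i1: "CIff (tr f) (tr g) \<in> clogic Axc" using re.IH by simp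
  have i2: "CIff (tr g) (tr f) \<in> clogic Axc" by (rule L_sem1[OF i1]) auto
  have b: "CIff CBot CBot \<in> clogic Axc" by (rule L_sem0) simp
  have "CImp (Cond CBot (tr f)) (Cond CBot (tr g)) \<in> clogic Axc" by (rule clogic.re[OF b i1])
  moreover have "CImp (Cond CBot (tr g)) (Cond CBot (tr f)) \<in> clogic Axc" by (rule clogic.re[OF b i2])
  ultimately have "CIff (Cond CBot (tr f)) (Cond CBot (tr g)) \<in> clogic Axc"
    by (rule L_sem2) (auto simp: CIff_def)
  then show ?case by simp
qed

lemma untr_sound:
  assumes "f \<in> clogic Axc" and AX: "\<And>a. a \<in> Axc \<Longrightarrow> untr a \<in> mlogic Axm"
  shows "untr f \<in> mlogic Axm"
  using assms(1)
proof (induction rule: clogic.induct)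
  case (taut f)
  then show ?case using meval_untr by (auto intro!: M_sem[of "{}"] simp: ctaut_def)
next
  case (ax f)
  then show ?case using AX by blast
next
  case (mp f g)
  then show ?case by (auto intro: mlogic.mp)
next
  case (re f0 f1 g0 g1)
  have "MIff (untr g0) (untr g1) \<in> mlogic Axm" using re.IH(2) by simp
  then have "MIff (MBox (untr g0)) (MBox (untr g1)) \<in> mlogic Axm" by (rule mlogic.re)
  then have "MImp (MBox (untr g0)) (MBox (untr g1)) \<in> mlogic Axm" by (rule M_sem1) auto
  then show ?case by simp
qed

lemma ULIP_transfer:
  assumes U: "ULIP cV CImp (clogic Axc)"
    and T1: "\<And>a. a \<in> Axm \<Longrightarrow> tr a \<in> clogic Axc"
    and T2: "\<And>a. a \<in> Axc \<Longrightarrow> untr a \<in> mlogic Axm"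
  shows "ULIP mV MImp (mlogic Axm)"
  unfolding ULIP_def
proof (intro allI conjI)
  fix \<phi> p pol
  obtain A where A: "p \<notin> cV pol A" "\<forall>d. cV d A \<subseteq> cV d (tr \<phi>)" "CImp A (tr \<phi>) \<in> clogic Axc"
    "\<forall>\<psi>. p \<notin> cV pol \<psi> \<longrightarrow> CImp \<psi> (tr \<phi>) \<in> clogic Axc \<longrightarrow> CImp \<psi> A \<in> clogic Axc"
    using U unfolding ULIP_def by blast
  show "\<exists>A. p \<notin> mV pol A \<and> (\<forall>d. mV d A \<subseteq> mV d \<phi>) \<and> MImp A \<phi> \<in> mlogic Axm \<and>
      (\<forall>\<psi>. p \<notin> mV pol \<psi> \<longrightarrow> MImp \<psi> \<phi> \<in> mlogic Axm \<longrightarrow> MImp \<psi> A \<in> mlogic Axm)"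
  proof (intro exI[of _ "untr A"] conjI allI impI)
    show "p \<notin> mV pol (untr A)" using A(1) mV_untr by blast
    fix d show "mV d (untr A) \<subseteq> mV d \<phi>" using A(2) mV_untr[of d A] by auto
  next
    show "MImp (untr A) \<phi> \<in> mlogic Axm" using untr_sound[OF A(3) T2] by simp
  next
    fix \<psi> assume "p \<notin> mV pol \<psi>" "MImp \<psi> \<phi> \<in> mlogic Axm"
    then have "CImp (tr \<psi>) A \<in> clogic Axc" using A(4) tr_sound[OF _ T1, of "MImp \<psi> \<phi>"] by simp
    then show "MImp \<psi> (untr A) \<in> mlogic Axm" using untr_sound[OF _ T2] by fastforce
  qed
  obtain E where E: "p \<notin> cV pol E" "\<forall>d. cV d E \<subseteq> cV d (tr \<phi>)" "CImp (tr \<phi>) E \<in> clogic Axc"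
    "\<forall>\<psi>. p \<notin> cV pol \<psi> \<longrightarrow> CImp (tr \<phi>) \<psi> \<in> clogic Axc \<longrightarrow> CImp E \<psi> \<in> clogic Axc"
    using U unfolding ULIP_def by blast
  show "\<exists>E. p \<notin> mV pol E \<and> (\<forall>d. mV d E \<subseteq> mV d \<phi>) \<and> MImp \<phi> E \<in> mlogic Axm \<and>
      (\<forall>\<psi>. p \<notin> mV pol \<psi> \<longrightarrow> MImp \<phi> \<psi> \<in> mlogic Axm \<longrightarrow> MImp E \<psi> \<in> mlogic Axm)"
  proof (intro exI[of _ "untr E"] conjI allI impI)
    show "p \<notin> mV pol (untr E)" using E(1) mV_untr by blast
    fix d show "mV d (untr E) \<subseteq> mV d \<phi>" using E(2) mV_untr[of d E] by auto
  next
    show "MImp \<phi> (untr E) \<in> mlogic Axm" using untr_sound[OF E(3) T2] by simp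
  next
    fix \<psi> assume "p \<notin> mV pol \<psi>" "MImp \<phi> \<psi> \<in> mlogic Axm"
    then have "CImp E (tr \<psi>) \<in> clogic Axc" using E(4) tr_sound[OF _ T1, of "MImp \<phi> \<psi>"] by simp
    then show "MImp (untr E) \<psi> \<in> mlogic Axm" using untr_sound[OF _ T2] by fastforce
  qed
qed

lemma finite_mV: "finite (mV d f)"
  by (induction f arbitrary: d) auto

lemma modal_all:
  assumes "ULIP cV CImp (clogic Axc)"
    and "\<And>a. a \<in> Axm \<Longrightarrow> tr a \<in> clogic Axc"
    and "\<And>a. a \<in> Axc \<Longrightarrow> untr a \<in> mlogic Axm"
  shows "all_interp_props mV MImp (mlogic Axm)"
proof (rule ULIP_all[OF ULIP_transfer[OF assms]])
  show "MImp a c \<in> mlogic Axm" if "MImp a b \<in> mlogic Axm" "MImp b c \<in> mlogic Axm" for a b c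
    by (rule M_sem2[OF that]) auto
  show "MImp a a \<in> mlogic Axm" for a by (rule M_sem[of "{}"]) auto
  show "finite (mV d f)" for d f by (rule finite_mV)
qed

lemma trM: "a \<in> axM \<Longrightarrow> tr a \<in> axCM" unfolding axM_def axCM_def by auto
lemma trC: "a \<in> axC \<Longrightarrow> tr a \<in> axCC" unfolding axC_def axCC_def by auto
lemma trN: "a \<in> axN \<Longrightarrow> tr a \<in> axCN" unfolding axN_def axCN_def by auto
lemma untrM: "a \<in> axCM \<Longrightarrow> untr a \<in> axM" unfolding axM_def axCM_def by auto
lemma untrC: "a \<in> axCC \<Longrightarrow> untr a \<in> axC" unfolding axC_def axCC_def by auto
lemma untrN: "a \<in> axCN \<Longrightarrow> untr a \<in> axN" unfolding axN_def axCN_def by auto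

lemma cl_ax: "a \<in> Ax \<Longrightarrow> a \<in> clogic Ax" by (rule clogic.ax)
lemma ml_ax: "a \<in> Ax \<Longrightarrow> a \<in> mlogic Ax" by (rule mlogic.ax)

lemma ULIP_c: "ULIP cV CImp (clogic (lax g))"
  using ULIP_LL[of g] unfolding LL_def .

theorem mainTheorem8:
  shows "(\<forall>L \<in> {logE, logM, logMC, logEN, logMN, logK}. all_interp_props mV MImp L) \<and>
         (\<forall>L \<in> {logCE, logCM, logCMC, logCEN, logCMN, logCK, logCKID}. all_interp_props cV CImp L)"
proof (intro conjI ballI)
  fix L assume "L \<in> {logCE, logCM, logCMC, logCEN, logCMN, logCK, logCKID}"
  then obtain g where "L = LL g"
    unfolding logCE_def logCM_def logCMC_def logCEN_def logCMN_def logCK_def logCKID_def LL_def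
    by (metis lax.simps insertE empty_iff)
  then show "all_interp_props cV CImp L" using cond_all by simp
next
  fix L assume L: "L \<in> {logE, logM, logMC, logEN, logMN, logK}"
  have E: "all_interp_props mV MImp logE" unfolding logE_def
    by (rule modal_all[OF ULIP_c[of LgE]]) (auto intro: cl_ax ml_ax)
  have EN: "all_interp_props mV MImp logEN" unfolding logEN_def
    by (rule modal_all[OF ULIP_c[of LgEN]]) (auto intro: cl_ax ml_ax trN untrN)
  have M: "all_interp_props mV MImp logM" unfolding logM_def
    by (rule modal_all[OF ULIP_c[of LgM]]) (auto intro: cl_ax ml_ax trM untrM)
  have MN: "all_interp_props mV MImp logMN" unfolding logMN_def
    by (rule modal_all[OF ULIP_c[of LgMN]]) (auto intro: cl_ax ml_ax trM untrM trN untrN)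
  have MC: "all_interp_props mV MImp logMC" unfolding logMC_def
    by (rule modal_all[OF ULIP_c[of LgMC]]) (auto intro: cl_ax ml_ax trM untrM trC untrC)
  have K: "all_interp_props mV MImp logK" unfolding logK_def
    by (rule modal_all[OF ULIP_c[of LgK]]) (auto intro: cl_ax ml_ax trM untrM trC untrC trN untrN)
  show "all_interp_props mV MImp L" using L E EN M MN MC K by blast
qed


end
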